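(* Let $n\ge 2$. For every $T\in\underline{E}_n$, the sequence $\mathsf r^T$ is a tree-like factorization of $\lambda_n$, and the map $T\mapsto \mathsf r^T$ is a bijection from $\underline{E}_n$ onto the set of tree-like factorizations of $\lambda_n$.
   Context: The affine symmetric group $\widetilde S_n$ is the group, under composition, of bijections $w:\mathbb Z\to\mathbb Z$ with $w(i+n)=w(i)+n$ and $\sum_{i=1}^n w(i)=\binom{n+1}{2}$. For $i\not\equiv j\pmod n$, $(\!(i,j)\!)$ is the affine reflection interchanging $i+kn$ and $j+kn$ for all $k\in\mathbb Z$; $(\!(i,j)\!)=(\!(j,i)\!)=(\!(i+kn,j+kn)\!)$. Let $\lambda_n$ be the element with $\lambda_n(k)=k+n$ for $k\not\equiv0\pmod n$ and $\lambda_n(k)=k-n(n-1)$ for $k\equiv 0\pmod n$; its reflection length is $2n-2$. $\textsc{fact}(\lambda_n)$ is the set of sequences $[r_1,\dots,r_{2n-2}]$ of reflections with $r_1\cdots r_{2n-2}=\lambda_n$. Such a sequence is tree-like if one can write $r_k=(\!(a_{k-1},b_k)\!)$ with integers $a_{k-1}<b_k$ ($1\le k\le 2n-2$) and $a_k\equiv b_k\pmod n$ ($1\le k\le 2n-3$). $\underline{E}_n$ is the set of plane-embedded trees with vertex set $[n]=\{1,\dots,n\}$ together with a marked edge incident to the vertex $n$, considered up to orientation-preserving homeomorphism of the plane. For $T\in\underline E_n$, perform the clockwise walk around $T$: start at $n$ and traverse the marked edge first; thereafter, upon arriving at a vertex $v$ along an edge $e$, leave along the edge immediately following $e$ in the clockwise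 order of edges around $v$ (at a leaf this is $e$ itself). This walk traverses every edge exactly twice and visits vertices $v_0=n,v_1,\dots,v_{2n-2}=n$. Define $\mathsf r^T=[t_1,\dots,t_{2n-2}]$ where $t_k=(\!(v_{k-1},v_k)\!)$ if $v_{k-1}<v_k$ and $t_k=(\!(v_{k-1}-n,v_k)\!)$ if $v_{k-1}>v_k$. *)

theory Defs
  imports Main
begin

text \<open>The affine reflection ((i,j)) in the affine symmetric group on n letters,
  as a bijection of the integers: it interchanges i+kn and j+kn for all k.\<close>
definition aff_refl :: "nat \<Rightarrow> int \<Rightarrow> int \<Rightarrow> (int \<Rightarrow> int)" where
  "aff_refl n i j = (\<lambda>x. if x mod int n = i mod int n then x + (j - i)
                          else if x mod int n = j mod int n then x - (j - i)
                          else x)"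

definition aff_reflections :: "nat \<Rightarrow> (int \<Rightarrow> int) set" where
  "aff_reflections n = {aff_refl n i j | i j. i mod int n \<noteq> j mod int n}"

definition lambda_n :: "nat \<Rightarrow> (int \<Rightarrow> int)" where
  "lambda_n n = (\<lambda>k. if k mod int n = 0 then k - int n * (int n - 1) else k + int n)"

definition prod_refl :: "(int \<Rightarrow> int) list \<Rightarrow> (int \<Rightarrow> int)" where
  "prod_refl rs = foldr (\<circ>) rs id"

text \<open>fact(lambda_n): factorizations of lambda_n into 2n-2 reflections
  (2n-2 being the reflection length of lambda_n).\<close>
definition fact_lambda :: "nat \<Rightarrow> (int \<Rightarrow> int) list set" where
  "fact_lambda n = {rs. length rs = 2 * n - 2 \<and> set rs \<subseteq> aff_reflections n
                        \<and> prod_refl rs = lambda_n n}"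

text \<open>Tree-like sequences: r_k = ((a_{k-1}, b_k)) with a_{k-1} < b_k (k = 1..2n-2)
  and a_k = b_k mod n (k = 1..2n-3). (List index k-1 holds r_k.)\<close>
definition tree_like :: "nat \<Rightarrow> (int \<Rightarrow> int) list \<Rightarrow> bool" where
  "tree_like n rs \<longleftrightarrow> length rs = 2 * n - 2 \<and>
     (\<exists>a b :: nat \<Rightarrow> int.
        (\<forall>k \<in> {1..2*n-2}. a (k-1) < b k \<and> a (k-1) mod int n \<noteq> b k mod int n
                          \<and> rs ! (k-1) = aff_refl n (a (k-1)) (b k)) \<and>
        (\<forall>k \<in> {1..2*n-3}. a k mod int n = b k mod int n))"

text \<open>A plane embedding of a tree with labelled vertices, up to orientation-preserving
  homeomorphism, is encoded by its rotation system: for every vertex v, the cyclic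
  (clockwise) order of the edges at v. Edges at v are identified with darts (v,u),
  {v,u} an edge; rho (v,u) is the dart at v immediately following (v,u) in the
  clockwise order around v. rho is the identity outside the darts (canonical form).
  An element of E_n is a triple (edge set, rotation, other endpoint m of the marked
  edge {n,m}).\<close>

definition darts :: "nat set set \<Rightarrow> (nat \<times> nat) set" where
  "darts E = {(a, b). {a, b} \<in> E}"

definition is_tree_on :: "nat \<Rightarrow> nat set set \<Rightarrow> bool" where
  "is_tree_on n E \<longleftrightarrow>
     E \<subseteq> {{a, b} | a b. a \<in> {1..n} \<and> b \<in> {1..n} \<and> a \<noteq> b} \<and>
     card E = n - 1 \<and>
     (\<forall>v \<in> {1..n}. (n, v) \<in> {(a, b). {a, b} \<in> E}\<^sup>*)"

definition is_rotation_system :: "nat set set \<Rightarrow> (nat \<times> nat \<Rightarrow> nat \<times> nat) \<Rightarrow> bool" where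
  "is_rotation_system E \<rho> \<longleftrightarrow>
     bij_betw \<rho> (darts E) (darts E) \<and>
     (\<forall>d. d \<notin> darts E \<longrightarrow> \<rho> d = d) \<and>
     (\<forall>d \<in> darts E. fst (\<rho> d) = fst d) \<and>
     (\<forall>d \<in> darts E. \<forall>d' \<in> darts E. fst d = fst d' \<longrightarrow> (\<exists>k. (\<rho> ^^ k) d = d'))"

definition E_marked :: "nat \<Rightarrow> (nat set set \<times> (nat \<times> nat \<Rightarrow> nat \<times> nat) \<times> nat) set" where
  "E_marked n = {(E, \<rho>, m). is_tree_on n E \<and> is_rotation_system E \<rho> \<and> {n, m} \<in> E}"

text \<open>The first traversed edge is the
  marked one, from n to m; arriving at v from u, leave along the edge following {v,u}
  in the clockwise order around v.\<close>
fun walk_dart :: "nat \<Rightarrow> (nat \<times> nat \<Rightarrow> nat \<times> nat) \<Rightarrow> nat \<Rightarrow> nat \<Rightarrow> nat \<times> nat" where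
  "walk_dart n \<rho> m 0 = (n, m)"
| "walk_dart n \<rho> m (Suc k) =
     (let (u, v) = walk_dart n \<rho> m k in (v, snd (\<rho> (v, u))))"

text \<open>walk_dart n rho m (k-1) = (v_{k-1}, v_k). The sequence r^T.\<close>
definition r_T :: "nat \<Rightarrow> (nat set set \<times> (nat \<times> nat \<Rightarrow> nat \<times> nat) \<times> nat) \<Rightarrow> (int \<Rightarrow> int) list" where
  "r_T n T = (case T of (E, \<rho>, m) \<Rightarrow>
     map (\<lambda>k. let (u, v) = walk_dart n \<rho> m k in
               if u < v then aff_refl n (int u) (int v)
               else aff_refl n (int u - int n) (int v))
         [0..<2 * n - 2])"

end

theory Submission
  imports Defs
begin

lemma modeq_iff_dvd: "(a::int) mod m = b mod m \<longleftrightarrow> m dvd (a - b)"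
  by (simp add: mod_eq_dvd_iff)

lemma mod_add_dvd: "(N::int) dvd b \<Longrightarrow> (a + b) mod N = a mod N"
  by (metis add.right_neutral dvd_imp_mod_0 mod_add_right_eq)

lemma aff_refl_shift: "aff_refl n (i + t * int n) (j + t * int n) = aff_refl n i j"
  unfolding aff_refl_def by (rule ext) simp

lemma aff_refl_shift': 
  assumes "i' mod int n = i mod int n" "j' - i' = j - i"
  shows "aff_refl n i' j' = aff_refl n i j"
proof -
  have "j' mod int n = j mod int n"
    using assms by (metis add.commute diff_add_cancel mod_add_cong)
  then show ?thesis using assms unfolding aff_refl_def by auto
qed

lemma aff_refl_periodic: "aff_refl n i j (x + t * int n) = aff_refl n i j x + t * int n"
  unfolding aff_refl_def by simp

lemma aff_refl_invol:
  assumes "i mod int n \<noteq> j mod int n"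
  shows "aff_refl n i j (aff_refl n i j x) = x"
proof -
  consider "x mod int n = i mod int n" | "x mod int n \<noteq> i mod int n" "x mod int n = j mod int n"
    | "x mod int n \<noteq> i mod int n" "x mod int n \<noteq> j mod int n" by blast
  then show ?thesis
  proof cases
    case 1
    then have "(x + (j - i)) mod int n = j mod int n"
      by (metis add.commute diff_add_cancel mod_add_cong)
    then show ?thesis using 1 assms unfolding aff_refl_def by auto
  next
    case 2
    then have "(x - (j - i)) mod int n = i mod int n"
      by (metis diff_diff_eq2 diff_add_cancel mod_diff_cong add_diff_cancel_left')
    then show ?thesis using 2 assms unfolding aff_refl_def by auto
  next
    case 3 then show ?thesis unfolding aff_refl_def by auto
  qed
qed

lemma aff_refl_bij: "i mod int n \<noteq> j mod int n \<Longrightarrow> bij (aff_refl n i j)"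
  by (metis aff_refl_invol bij_betw_imageI inj_on_inverseI surj_def)

lemma aff_refl_at_i: "i mod int n \<noteq> j mod int n \<Longrightarrow> x mod int n = i mod int n \<Longrightarrow> aff_refl n i j x = x + (j - i)"
  unfolding aff_refl_def by auto
lemma aff_refl_at_j: "i mod int n \<noteq> j mod int n \<Longrightarrow> x mod int n = j mod int n \<Longrightarrow> aff_refl n i j x = x - (j - i)"
  unfolding aff_refl_def by auto
lemma aff_refl_other: "x mod int n \<noteq> i mod int n \<Longrightarrow> x mod int n \<noteq> j mod int n \<Longrightarrow> aff_refl n i j x = x"
  unfolding aff_refl_def by auto


lemma prod_refl_Nil[simp]: "prod_refl [] = id" unfolding prod_refl_def by simp
lemma prod_refl_Cons[simp]: "prod_refl (r # rs) = r \<circ> prod_refl rs" unfolding prod_refl_def by simp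

lemma prod_refl_periodic:
  assumes "set rs \<subseteq> aff_reflections n"
  shows "prod_refl rs (x + t * int n) = prod_refl rs x + t * int n"
  using assms
proof (induction rs arbitrary: x)
  case Nil then show ?case by simp
next
  case (Cons r rs)
  then obtain i j where r: "r = aff_refl n i j" unfolding aff_reflections_def by auto
  show ?case using Cons by (simp add: r aff_refl_periodic)
qed

lemma prod_refl_bij:
  assumes "set rs \<subseteq> aff_reflections n"
  shows "bij (prod_refl rs)"
  using assms
proof (induction rs)
  case Nil then show ?case using bij_id by (simp add: id_def)
next
  case (Cons r rs)
  then obtain i j where r: "r = aff_refl n i j" "i mod int n \<noteq> j mod int n" unfolding aff_reflections_def by auto
  have "bij (aff_refl n i j \<circ> prod_refl rs)" using Cons aff_refl_bij[OF r(2)] by (intro bij_comp) auto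
  then show ?case by (simp add: r comp_def)
qed

lemma prod_refl_mod_inj:
  assumes "set rs \<subseteq> aff_reflections n" "n > 0"
    and "prod_refl rs x mod int n = prod_refl rs y mod int n"
  shows "x mod int n = y mod int n"
proof -
  let ?P = "prod_refl rs"
  obtain k where "?P y - ?P x = int n * k"
    using assms(3) by (metis modeq_iff_dvd dvd_def)
  then have t: "?P y = ?P x + k * int n" by (simp add: algebra_simps)
  define t where "t = k"
  note t = t[folded t_def]
  have "?P y = ?P (x + t * int n)" using t prod_refl_periodic[OF assms(1)] by simp
  then have "y = x + t * int n" using prod_refl_bij[OF assms(1)] by (metis bij_is_inj injD)
  then show ?thesis by simp
qed

lemma prod_refl_mod_cong:
  assumes "set rs \<subseteq> aff_reflections n"
    and "x mod int n = y mod int n"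
  shows "prod_refl rs x mod int n = prod_refl rs y mod int n"
proof -
  obtain k where "y - x = int n * k"
    using assms(2) by (metis modeq_iff_dvd dvd_def)
  then have "y = x + k * int n" by (simp add: algebra_simps)
  then show ?thesis using prod_refl_periodic[OF assms(1)] by simp
qed


definition vtx :: "nat \<Rightarrow> int \<Rightarrow> nat" where "vtx n z = nat ((z - 1) mod int n) + 1"

lemma vtx_range: "n > 0 \<Longrightarrow> vtx n z \<in> {1..n}"
  proof -
  assume n: "n > 0"
  have "(z - 1) mod int n < int n" using n by simp
  then have "nat ((z - 1) mod int n) < n" using n by (simp add: nat_less_iff)
  then show ?thesis unfolding vtx_def by simp
qed

lemma vtx_int: "n > 0 \<Longrightarrow> int (vtx n z) = (z - 1) mod int n + 1"
proof -
  assume n: "n > 0"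
  have "0 \<le> (z - 1) mod int n" using n by simp
  then have "int (nat ((z - 1) mod int n)) = (z - 1) mod int n" by (rule nat_0_le)
  then show ?thesis unfolding vtx_def by (simp only: of_nat_add of_nat_1)
qed

lemma vtx_mod: "n > 0 \<Longrightarrow> int (vtx n z) mod int n = z mod int n"
proof -
  assume n: "n > 0"
  have "int (vtx n z) mod int n = ((z - 1) mod int n + 1) mod int n" using vtx_int[OF n] by simp
  also have "\<dots> = (z - 1 + 1) mod int n" by (rule mod_add_left_eq)
  finally show ?thesis by simp
qed

lemma nat_mod_eq_in_range:
  assumes "a \<in> {1..n}" "b \<in> {1..n}" "int a mod int n = int b mod int n"
  shows "a = b"
proof -
  have h: "int a mod int n = (if a = n then 0 else int a)" if "a \<in> {1..n}" for a
    using that by auto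
  show ?thesis using h[OF assms(1)] h[OF assms(2)] assms by (auto split: if_splits)
qed

lemma vtx_eq_iff:
  assumes "n > 0" "w \<in> {1..n}"
  shows "vtx n z = w \<longleftrightarrow> z mod int n = int w mod int n"
  using nat_mod_eq_in_range[OF vtx_range[OF assms(1)] assms(2)] vtx_mod[OF assms(1)] by metis

lemma vtx_eq_iff2:
  assumes "n > 0"
  shows "vtx n z = vtx n z' \<longleftrightarrow> z mod int n = z' mod int n"
  using vtx_eq_iff[OF assms vtx_range[OF assms]] vtx_mod[OF assms] by metis

locale ps =
  fixes n :: nat and v :: "nat \<Rightarrow> nat" and j1 j2 bb :: "nat \<Rightarrow> nat"
  assumes n2: "2 \<le> n"
    and vr: "\<And>k. k \<le> 2*n-2 \<Longrightarrow> v k \<in> {1..n}"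
    and v0: "v 0 = n" and vm: "v (2*n-2) = n"
    and vne: "\<And>i. i < 2*n-2 \<Longrightarrow> v i \<noteq> v (Suc i)"
    and jlt: "\<And>x. x \<in> {1..<n} \<Longrightarrow> j2 x < j1 x \<and> j1 x < 2*n-2"
    and vj1: "\<And>x. x \<in> {1..<n} \<Longrightarrow> v (j1 x) = x \<and> v (Suc (j1 x)) = bb x"
    and vj2: "\<And>x. x \<in> {1..<n} \<Longrightarrow> v (j2 x) = bb x \<and> v (Suc (j2 x)) = x"
    and av1: "\<And>x k. x \<in> {1..<n} \<Longrightarrow> k \<le> 2*n-2 \<Longrightarrow> k \<le> j2 x \<or> Suc (j1 x) \<le> k \<Longrightarrow> v k \<noteq> x"
    and av2: "\<And>x k. x \<in> {1..<n} \<Longrightarrow> Suc (j2 x) \<le> k \<Longrightarrow> k \<le> j1 x \<Longrightarrow> v k \<noteq> bb x"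

locale chain0 =
  fixes n :: nat and c :: "nat \<Rightarrow> int"
  assumes n2: "2 \<le> n"
    and incr: "\<And>i. i < 2*n-2 \<Longrightarrow> c i < c (Suc i)"
    and ndiv: "\<And>i. i < 2*n-2 \<Longrightarrow> c i mod int n \<noteq> c (Suc i) mod int n"
begin

abbreviation "m \<equiv> 2*n-2"
definition R where "R i = aff_refl n (c i) (c (Suc i))"
definition F where "F k = prod_refl (map R [k..<m])"
definition d where "d i = c (Suc i) - c i"

lemma npos: "n > 0" using n2 by simp

lemma F_set: "set (map R [k..<m]) \<subseteq> aff_reflections n"
  using ndiv by (fastforce simp: R_def aff_reflections_def)

lemma F_m: "F m = id" unfolding F_def by simp

lemma F_step: "k < m \<Longrightarrow> F k x = R k (F (Suc k) x)"
  unfolding F_def by (simp add: upt_conv_Cons)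


lemma c_mono: "i < j \<Longrightarrow> j \<le> m \<Longrightarrow> c i < c j"
proof (induction j)
  case 0 then show ?case by simp
next
  case (Suc j)
  then show ?case using incr[of j] by (cases "i = j") auto
qed

lemma hole: "x mod int n = c m mod int n \<Longrightarrow> k \<le> m \<Longrightarrow> F k x = x - (c m - c k)"
proof (induction "m - k" arbitrary: k)
  case 0 then have "k = m" by simp
  then show ?case by (simp add: F_m)
next
  case (Suc j)
  then have km: "k < m" by simp
  have IH: "F (Suc k) x = x - (c m - c (Suc k))" using Suc by simp
  have "(x - (c m - c (Suc k))) mod int n = c (Suc k) mod int n"
    using Suc.prems(1) by (simp add: modeq_iff_dvd algebra_simps)
  then have "R k (x - (c m - c (Suc k))) = x - (c m - c (Suc k)) - (c (Suc k) - c k)"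
    unfolding R_def using ndiv[OF km] by (intro aff_refl_at_j) auto
  then show ?case using F_step[OF km] IH by simp
qed

end

locale chain = chain0 +
  assumes prod: "prod_refl (map (\<lambda>i. aff_refl n (c i) (c (Suc i))) [0..<2*n-2]) = lambda_n n"
begin

lemma F0: "F 0 = lambda_n n" using prod unfolding F_def R_def by simp

lemma cm0: "c m mod int n = 0" and c0: "c 0 = c m - int n * (int n - 1)"
proof -
  have "F 0 (c m) = c 0" using hole[of "c m" 0] by simp
  then have h: "lambda_n n (c m) = c 0" using F0 by simp
  have lt: "c 0 < c m" using c_mono[of 0 m] n2 by simp
  show "c m mod int n = 0"
  proof (rule ccontr)
    assume "c m mod int n \<noteq> 0"
    then have "lambda_n n (c m) = c m + int n" unfolding lambda_n_def by simp
    then show False using h lt by simp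
  qed
  then show "c 0 = c m - int n * (int n - 1)" using h unfolding lambda_n_def by simp
qed

lemma tile_av: "x mod int n \<noteq> 0 \<Longrightarrow> k \<le> m \<Longrightarrow> F k x mod int n \<noteq> c k mod int n"
proof
  assume a: "x mod int n \<noteq> 0" "k \<le> m" "F k x mod int n = c k mod int n"
  have "F k (c m) = c k" using hole[of "c m" k] a(2) by simp
  then have "prod_refl (map R [k..<m]) x mod int n = prod_refl (map R [k..<m]) (c m) mod int n"
    using a(3) unfolding F_def by simp
  then have "x mod int n = c m mod int n" using prod_refl_mod_inj[OF F_set npos] by blast
  then show False using a(1) cm0 by simp
qed

lemma tile_step:
  assumes "x mod int n \<noteq> 0" "k < m"
  shows "F k x = F (Suc k) x + (if F (Suc k) x mod int n = c k mod int n then d k else 0)"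
proof -
  have ne: "F (Suc k) x mod int n \<noteq> c (Suc k) mod int n" using tile_av assms by simp
  show ?thesis
  proof (cases "F (Suc k) x mod int n = c k mod int n")
    case True
    then show ?thesis using F_step[OF assms(2)] ndiv[OF assms(2)] unfolding R_def d_def
      by (simp add: aff_refl_at_i)
  next
    case False
    then show ?thesis using F_step[OF assms(2)] ne unfolding R_def d_def
      by (simp add: aff_refl_other)
  qed
qed

definition U where "U x = {i. i < m \<and> F (Suc i) x mod int n = c i mod int n}"

lemma U_fin: "finite (U x)" unfolding U_def by simp

lemma tile_sum: "x mod int n \<noteq> 0 \<Longrightarrow> k \<le> m \<Longrightarrow> F k x = x + (\<Sum>i\<in>{i\<in>U x. k \<le> i}. d i)"
proof (induction "m - k" arbitrary: k)
  case 0 then have km: "k = m" by simp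
  have e: "{i\<in>U x. m \<le> i} = {}" unfolding U_def by auto
  show ?case by (simp add: km e F_m)
next
  case (Suc j)
  then have km: "k < m" by simp
  have IH: "F (Suc k) x = x + (\<Sum>i\<in>{i\<in>U x. Suc k \<le> i}. d i)" using Suc by simp
  show ?case
  proof (cases "k \<in> U x")
    case True
    then have "{i\<in>U x. k \<le> i} = insert k {i\<in>U x. Suc k \<le> i}" by auto
    moreover have "F (Suc k) x mod int n = c k mod int n" using True unfolding U_def by simp
    ultimately show ?thesis using tile_step[OF Suc.prems(1) km] IH U_fin by simp
  next
    case False
    then have "{i\<in>U x. k \<le> i} = {i\<in>U x. Suc k \<le> i}" by (auto simp: Suc_le_eq) (metis le_neq_implies_less)
    moreover have "F (Suc k) x mod int n \<noteq> c k mod int n" using False km unfolding U_def by simp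
    ultimately show ?thesis using tile_step[OF Suc.prems(1) km] IH by simp
  qed
qed

lemma tile_mod: "x \<in> {1..<n} \<Longrightarrow> int x mod int n \<noteq> 0"
  by auto

lemma tile_F0: "x \<in> {1..<n} \<Longrightarrow> F 0 (int x) = int x + int n"
  using F0 tile_mod[of x] unfolding lambda_n_def by simp

lemma tile_sumU: "x \<in> {1..<n} \<Longrightarrow> (\<Sum>i\<in>U (int x). d i) = int n"
proof -
  assume x: "x \<in> {1..<n}"
  have "{i\<in>U (int x). 0 \<le> i} = U (int x)" by auto
  then show ?thesis using tile_sum[OF tile_mod[OF x], of 0] tile_F0[OF x] by simp
qed

lemma cover: "i < m \<Longrightarrow> \<exists>x\<in>{1..<n}. i \<in> U (int x)"
proof -
  assume im: "i < m"
  obtain y where y: "F (Suc i) y = c i"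
    using prod_refl_bij[OF F_set] unfolding F_def by (metis bij_pointE)
  have y0: "y mod int n \<noteq> 0"
  proof
    assume "y mod int n = 0"
    then have "F (Suc i) y = y - (c m - c (Suc i))" using hole cm0 im by simp
    then have ci: "c i = c (Suc i) + (y - c m)" using y by simp
    have "int n dvd (y - c m)" using \<open>y mod int n = 0\<close> cm0 by (simp add: modeq_iff_dvd[symmetric])
    then have "c i mod int n = c (Suc i) mod int n" unfolding ci by (rule mod_add_dvd)
    then show False using ndiv[OF im] by simp
  qed
  define x where "x = nat (y mod int n)"
  have ix: "int x = y mod int n" unfolding x_def using npos by simp
  have "y mod int n < int n" using npos by simp
  then have xr: "x \<in> {1..<n}" using y0 ix by auto
  have "F (Suc i) (int x) mod int n = F (Suc i) y mod int n"
    using prod_refl_mod_cong[OF F_set, of "int x" y] ix unfolding F_def by simp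
  then have "i \<in> U (int x)" using y im unfolding U_def by simp
  then show ?thesis using xr by blast
qed

lemma cover_uniq:
  assumes "i \<in> U (int x)" "i \<in> U (int y)" "x \<in> {1..<n}" "y \<in> {1..<n}"
  shows "x = y"
proof -
  have "F (Suc i) (int x) mod int n = F (Suc i) (int y) mod int n" using assms unfolding U_def by simp
  then have "int x mod int n = int y mod int n" using prod_refl_mod_inj[OF F_set npos] unfolding F_def by blast
  then show ?thesis using assms(3,4) by simp
qed

lemma card_sum: "(\<Sum>x\<in>{1..<n}. card (U (int x))) = m"
proof -
  have "(\<Union>x\<in>{1..<n}. U (int x)) = {..<m}"
    using cover unfolding U_def by auto
  moreover have "card (\<Union>x\<in>{1..<n}. U (int x)) = (\<Sum>x\<in>{1..<n}. card (U (int x)))"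
    by (rule card_UN_disjoint) (auto simp: U_fin dest: cover_uniq)
  ultimately show ?thesis by simp
qed

lemma d_pos: "i < m \<Longrightarrow> 0 < d i" using incr unfolding d_def by simp
lemma d_mod: "i < m \<Longrightarrow> d i mod int n \<noteq> 0"
  using ndiv unfolding d_def by (simp add: modeq_iff_dvd dvd_eq_mod_eq_0[symmetric]) (metis dvd_minus_iff minus_diff_eq)

lemma card_ge2: "x \<in> {1..<n} \<Longrightarrow> 2 \<le> card (U (int x))"
proof (rule ccontr)
  assume x: "x \<in> {1..<n}" and "\<not> 2 \<le> card (U (int x))"
  then have "card (U (int x)) = 0 \<or> card (U (int x)) = 1" by linarith
  then show False
  proof
    assume "card (U (int x)) = 0"
    then have "U (int x) = {}" using U_fin by simp
    then show False using tile_sumU[OF x] npos by simp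
  next
    assume "card (U (int x)) = 1"
    then obtain i where i: "U (int x) = {i}" by (auto simp: card_Suc_eq)
    then have "d i = int n" using tile_sumU[OF x] by simp
    moreover have "i < m" using i unfolding U_def by auto
    ultimately show False using d_mod[of i] by simp
  qed
qed

lemma card2: "x \<in> {1..<n} \<Longrightarrow> card (U (int x)) = 2"
proof (rule ccontr)
  assume x: "x \<in> {1..<n}" "card (U (int x)) \<noteq> 2"
  then have "2 < card (U (int x))" using card_ge2 by (simp add: order_le_neq_trans)
  then have "(\<Sum>x\<in>{1..<n}. (2::nat)) < (\<Sum>x\<in>{1..<n}. card (U (int x)))"
    using x(1) card_ge2 by (intro sum_strict_mono_ex1) auto
  then show False using card_sum n2 by simp
qed

definition j1 where "j1 x = Max (U (int x))"
definition j2 where "j2 x = Min (U (int x))"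

lemma Uform: "x \<in> {1..<n} \<Longrightarrow> U (int x) = {j2 x, j1 x} \<and> j2 x < j1 x"
proof -
  assume x: "x \<in> {1..<n}"
  obtain a' b' where ab': "U (int x) = {a', b'}" "a' \<noteq> b'"
    using card2[OF x] unfolding card_2_iff by blast
  obtain a b where ab: "U (int x) = {a, b}" "a < b"
  proof (cases "a' < b'")
    case True then show ?thesis using ab' that by blast
  next
    case False then have "b' < a'" using ab'(2) by simp
    then show ?thesis using ab' that[of b' a'] by (simp add: insert_commute)
  qed
  then show ?thesis unfolding j1_def j2_def by (simp add: max_def min_def)
qed

lemma j_lt: "x \<in> {1..<n} \<Longrightarrow> j2 x < j1 x \<and> j1 x < m"
  using Uform[of x] unfolding U_def by auto

lemma dsum: "x \<in> {1..<n} \<Longrightarrow> d (j1 x) + d (j2 x) = int n"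
  using tile_sumU[of x] Uform[of x] by simp

lemma d_lt: "i < m \<Longrightarrow> d i < int n"
proof -
  assume im: "i < m"
  obtain x where x: "x \<in> {1..<n}" "i \<in> U (int x)" using cover[OF im] by blast
  then have "i = j1 x \<or> i = j2 x" using Uform by auto
  then show ?thesis using dsum[OF x(1)] d_pos[of "j1 x"] d_pos[of "j2 x"] j_lt[OF x(1)] by auto
qed

lemma posA: "x \<in> {1..<n} \<Longrightarrow> k \<le> m \<Longrightarrow> Suc (j1 x) \<le> k \<Longrightarrow> F k (int x) = int x"
proof -
  assume a: "x \<in> {1..<n}" "k \<le> m" "Suc (j1 x) \<le> k"
  have e: "{i\<in>U (int x). k \<le> i} = {}" using Uform[OF a(1)] a(3) by auto
  show ?thesis using tile_sum[OF tile_mod[OF a(1)] a(2)] unfolding e by simp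
qed

lemma posB: "x \<in> {1..<n} \<Longrightarrow> Suc (j2 x) \<le> k \<Longrightarrow> k \<le> j1 x \<Longrightarrow> F k (int x) = int x + d (j1 x)"
proof -
  assume a: "x \<in> {1..<n}" "Suc (j2 x) \<le> k" "k \<le> j1 x"
  have e: "{i\<in>U (int x). k \<le> i} = {j1 x}" using Uform[OF a(1)] a(2,3) by auto
  have t: "F k (int x) = int x + (\<Sum>i\<in>{i\<in>U (int x). k \<le> i}. d i)"
    using tile_sum[OF tile_mod[OF a(1)], of k] a j_lt[OF a(1)] by simp
  show ?thesis using t unfolding e by simp
qed

lemma posC: "x \<in> {1..<n} \<Longrightarrow> k \<le> j2 x \<Longrightarrow> F k (int x) = int x + int n"
proof -
  assume a: "x \<in> {1..<n}" "k \<le> j2 x"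
  have e: "{i\<in>U (int x). k \<le> i} = U (int x)" using Uform[OF a(1)] a(2) by auto
  have t: "F k (int x) = int x + (\<Sum>i\<in>{i\<in>U (int x). k \<le> i}. d i)"
    using tile_sum[OF tile_mod[OF a(1)], of k] a j_lt[OF a(1)] by simp
  show ?thesis using t tile_sumU[OF a(1)] unfolding e by simp
qed

abbreviation "vv k \<equiv> vtx n (c k)"

lemma modc_add: "(a::int) mod N = b mod N \<Longrightarrow> (a + e) mod N = (b + e) mod N"
  by (metis mod_add_left_eq)

lemma d_eq: "i < m \<Longrightarrow> d i = (int (vv (Suc i)) - int (vv i)) mod int n"
proof -
  assume im: "i < m"
  have "d i = d i mod int n" using d_pos[OF im] d_lt[OF im] by simp
  also have "\<dots> = (c (Suc i) - c i) mod int n" unfolding d_def by simp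
  also have "\<dots> = (int (vv (Suc i)) - int (vv i)) mod int n"
    using vtx_mod[OF npos] by (metis mod_diff_cong)
  finally show ?thesis .
qed

lemma c_j1: "x \<in> {1..<n} \<Longrightarrow> c (j1 x) mod int n = int x mod int n"
proof -
  assume x: "x \<in> {1..<n}"
  have "j1 x \<in> U (int x)" using Uform[OF x] by auto
  then have "F (Suc (j1 x)) (int x) mod int n = c (j1 x) mod int n" unfolding U_def by simp
  moreover have "F (Suc (j1 x)) (int x) = int x" using posA[OF x] j_lt[OF x] by simp
  ultimately show ?thesis by simp
qed

lemma c_j2: "x \<in> {1..<n} \<Longrightarrow> c (j2 x) mod int n = c (Suc (j1 x)) mod int n"
proof -
  assume x: "x \<in> {1..<n}"
  have "j2 x \<in> U (int x)" using Uform[OF x] by auto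
  then have "F (Suc (j2 x)) (int x) mod int n = c (j2 x) mod int n" unfolding U_def by simp
  moreover have "F (Suc (j2 x)) (int x) = int x + d (j1 x)" using posB[OF x] j_lt[OF x] by simp
  moreover have "(int x + d (j1 x)) mod int n = c (Suc (j1 x)) mod int n"
    using modc_add[OF c_j1[OF x, symmetric], of "d (j1 x)"] unfolding d_def by simp
  ultimately show ?thesis by simp
qed

lemma c_sj2: "x \<in> {1..<n} \<Longrightarrow> c (Suc (j2 x)) mod int n = int x mod int n"
proof -
  assume x: "x \<in> {1..<n}"
  have jm: "j2 x < m" using j_lt[OF x] by simp
  have "j2 x \<in> U (int x)" using Uform[OF x] by auto
  then have cnd: "F (Suc (j2 x)) (int x) mod int n = c (j2 x) mod int n" unfolding U_def by simp
  have "F (j2 x) (int x) = F (Suc (j2 x)) (int x) + d (j2 x)"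
    using tile_step[OF tile_mod[OF x] jm] cnd by simp
  then have "int x + int n = F (Suc (j2 x)) (int x) + d (j2 x)" using posC[OF x] by simp
  then have "(int x + int n) mod int n = (c (j2 x) + d (j2 x)) mod int n"
    using modc_add[OF cnd] by simp
  then show ?thesis unfolding d_def by simp
qed

lemma ps_inst: "ps n vv j1 j2 (\<lambda>x. vv (Suc (j1 x)))"
proof
  show "2 \<le> n" by (rule n2)
  show "\<And>k. k \<le> m \<Longrightarrow> vv k \<in> {1..n}" using vtx_range[OF npos] by blast
  have "c 0 = c m + (- (int n * (int n - 1)))" using c0 by simp
  then have "c 0 mod int n = c m mod int n" by (simp only:) (rule mod_add_dvd, simp)
  then have c0m: "c 0 mod int n = 0" using cm0 by simp
  show "vv 0 = n" using vtx_eq_iff[OF npos, of n] c0m npos by simp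
  show "vv m = n" using vtx_eq_iff[OF npos, of n] cm0 npos by simp
  show "\<And>i. i < m \<Longrightarrow> vv i \<noteq> vv (Suc i)" using vtx_eq_iff2[OF npos] ndiv by blast
  show "\<And>x. x \<in> {1..<n} \<Longrightarrow> j2 x < j1 x \<and> j1 x < m" by (rule j_lt)
  show "\<And>x. x \<in> {1..<n} \<Longrightarrow> vv (j1 x) = x \<and> vv (Suc (j1 x)) = vv (Suc (j1 x))"
    using vtx_eq_iff[OF npos] c_j1 by auto
  show "\<And>x. x \<in> {1..<n} \<Longrightarrow> vv (j2 x) = vv (Suc (j1 x)) \<and> vv (Suc (j2 x)) = x"
    using vtx_eq_iff[OF npos] vtx_eq_iff2[OF npos] c_j2 c_sj2 by auto
  show "\<And>x k. x \<in> {1..<n} \<Longrightarrow> k \<le> m \<Longrightarrow> k \<le> j2 x \<or> Suc (j1 x) \<le> k \<Longrightarrow> vv k \<noteq> x"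
  proof -
    fix x k assume x: "x \<in> {1..<n}" and k: "k \<le> m" "k \<le> j2 x \<or> Suc (j1 x) \<le> k"
    have "F k (int x) mod int n = int x mod int n"
      using k posA[OF x k(1)] posC[OF x] by auto
    then have "int x mod int n \<noteq> c k mod int n" using tile_av[OF tile_mod[OF x] k(1)] by simp
    then show "vv k \<noteq> x" using vtx_eq_iff[OF npos, of x] x by auto
  qed
  show "\<And>x k. x \<in> {1..<n} \<Longrightarrow> Suc (j2 x) \<le> k \<Longrightarrow> k \<le> j1 x \<Longrightarrow> vv k \<noteq> vv (Suc (j1 x))"
  proof -
    fix x k assume x: "x \<in> {1..<n}" and k: "Suc (j2 x) \<le> k" "k \<le> j1 x"
    have km: "k \<le> m" using k j_lt[OF x] by simp
    have "F k (int x) = int x + d (j1 x)" using posB[OF x k] .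
    moreover have "(int x + d (j1 x)) mod int n = c (Suc (j1 x)) mod int n"
      using modc_add[OF c_j1[OF x, symmetric], of "d (j1 x)"] unfolding d_def by simp
    ultimately have "c (Suc (j1 x)) mod int n \<noteq> c k mod int n"
      using tile_av[OF tile_mod[OF x] km] by simp
    then show "vv k \<noteq> vv (Suc (j1 x))" using vtx_eq_iff2[OF npos] by metis
  qed
qed

end


definition refl_of :: "nat \<Rightarrow> nat \<Rightarrow> nat \<Rightarrow> (int \<Rightarrow> int)" where
  "refl_of n u w = (if u < w then aff_refl n (int u) (int w) else aff_refl n (int u - int n) (int w))"

lemma refl_formula:
  assumes "n > 0" "u \<in> {1..n}" "w \<in> {1..n}" "u \<noteq> w" "i mod int n = int u mod int n"
    "j - i = (int w - int u) mod int n"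
  shows "aff_refl n i j = refl_of n u w"
proof (cases "u < w")
  case True
  have "(int w - int u) mod int n = int w - int u" using True assms(2,3) by (intro mod_pos_pos_trivial) auto
  then show ?thesis using True assms aff_refl_shift'[of i n "int u" j "int w"] unfolding refl_of_def by simp
next
  case False
  then have wu: "w < u" using assms(4) by simp
  have "(int w - int u) mod int n = (int w - int u + int n) mod int n" by simp
  also have "\<dots> = int w - int u + int n" using wu assms(2,3) by (intro mod_pos_pos_trivial) auto
  finally have e: "(int w - int u) mod int n = int w - int u + int n" .
  have "i mod int n = (int u - int n) mod int n" using assms(5) by simp
  then show ?thesis using False assms(6) e aff_refl_shift'[of i n "int u - int n" j "int w"]
    unfolding refl_of_def by simp
qed

lemma vmod_inj: "a \<in> {1..n} \<Longrightarrow> b \<in> {1..n} \<Longrightarrow> int a mod int n = int b mod int n \<longleftrightarrow> a = b"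
  using nat_mod_eq_in_range by blast

context ps begin

abbreviation "m \<equiv> 2*n-2"

lemma npos: "n > 0" using n2 by simp

lemma av1_after: "x \<in> {1..<n} \<Longrightarrow> y \<in> {1..<n} \<Longrightarrow> Suc (j1 x) \<le> Suc (j1 y) \<Longrightarrow> v (Suc (j1 y)) \<noteq> x"
proof -
  assume x: "x \<in> {1..<n}" and y: "y \<in> {1..<n}" and s: "Suc (j1 x) \<le> Suc (j1 y)"
  have k: "Suc (j1 y) \<le> 2*n-2" using jlt[OF y] by linarith
  show ?thesis using av1[OF x k] s by blast
qed

lemma no_swap: "x \<in> {1..<n} \<Longrightarrow> y \<in> {1..<n} \<Longrightarrow> x = bb y \<Longrightarrow> y = bb x \<Longrightarrow> False"
proof -
  assume x: "x \<in> {1..<n}" and y: "y \<in> {1..<n}" and xy: "x = bb y" "y = bb x"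
  have a: "j1 y < j1 x"
  proof (rule ccontr)
    assume "\<not> j1 y < j1 x"
    then have "Suc (j1 x) \<le> Suc (j1 y)" by simp
    then have "v (Suc (j1 y)) \<noteq> x" using av1_after[OF x y] by blast
    then show False using vj1[OF y] xy(1) by simp
  qed
  have b: "j1 x < j1 y"
  proof (rule ccontr)
    assume "\<not> j1 x < j1 y"
    then have "Suc (j1 y) \<le> Suc (j1 x)" by simp
    then have "v (Suc (j1 x)) \<noteq> y" using av1_after[OF y x] by blast
    then show False using vj1[OF x] xy(2) by simp
  qed
  show False using a b by simp
qed

lemma j1_inj: "inj_on j1 {1..<n}"
  by (rule inj_onI) (metis vj1)
lemma j2_inj: "inj_on j2 {1..<n}"
  by (rule inj_onI) (metis vj2)

lemma j12_ne: "x \<in> {1..<n} \<Longrightarrow> y \<in> {1..<n} \<Longrightarrow> j1 x \<noteq> j2 y"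
proof
  assume x: "x \<in> {1..<n}" and y: "y \<in> {1..<n}" and e: "j1 x = j2 y"
  have "x = bb y" using vj1[OF x] vj2[OF y] e by metis
  moreover have "y = bb x" using vj1[OF x] vj2[OF y] e by metis
  ultimately show False using no_swap[OF x y] by blast
qed

lemma steps: "{..<m} = j1 ` {1..<n} \<union> j2 ` {1..<n}"
proof -
  have sub: "j1 ` {1..<n} \<union> j2 ` {1..<n} \<subseteq> {..<m}" using jlt by fastforce
  have disj: "j1 ` {1..<n} \<inter> j2 ` {1..<n} = {}" using j12_ne by blast
  have "card (j1 ` {1..<n} \<union> j2 ` {1..<n}) = card (j1 ` {1..<n}) + card (j2 ` {1..<n})"
    using disj by (simp add: card_Un_disjoint)
  also have "\<dots> = (n - 1) + (n - 1)" using j1_inj j2_inj by (simp add: card_image)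
  also have "\<dots> = m" using n2 by simp
  finally have "card (j1 ` {1..<n} \<union> j2 ` {1..<n}) = card {..<m}" by simp
  then show ?thesis using sub by (intro card_subset_eq[symmetric]) auto
qed

lemma step_cases: "i < m \<Longrightarrow> \<exists>x\<in>{1..<n}. i = j1 x \<or> i = j2 x"
  using steps by blast

definition dart where "dart i = (v i, v (Suc i))"

lemma dart_j1: "x \<in> {1..<n} \<Longrightarrow> dart (j1 x) = (x, bb x)" using vj1 unfolding dart_def by simp
lemma dart_j2: "x \<in> {1..<n} \<Longrightarrow> dart (j2 x) = (bb x, x)" using vj2 unfolding dart_def by simp

lemma dart_inj: "i < m \<Longrightarrow> j < m \<Longrightarrow> dart i = dart j \<Longrightarrow> i = j"
proof -
  assume i: "i < m" and j: "j < m" and e: "dart i = dart j"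
  obtain x where x: "x \<in> {1..<n}" "i = j1 x \<or> i = j2 x" using step_cases[OF i] by blast
  obtain y where y: "y \<in> {1..<n}" "j = j1 y \<or> j = j2 y" using step_cases[OF j] by blast
  from x(2) y(2) show ?thesis
  proof (elim disjE)
    assume a: "i = j1 x" "j = j1 y"
    then have "(x, bb x) = (y, bb y)" using e dart_j1[OF x(1)] dart_j1[OF y(1)] by metis
    then show ?thesis using a by simp
  next
    assume a: "i = j2 x" "j = j2 y"
    then have "(bb x, x) = (bb y, y)" using e dart_j2[OF x(1)] dart_j2[OF y(1)] by metis
    then show ?thesis using a by simp
  next
    assume a: "i = j1 x" "j = j2 y"
    then have "(x, bb x) = (bb y, y)" using e dart_j1[OF x(1)] dart_j2[OF y(1)] by metis
    then have "x = bb y \<and> y = bb x" by (metis prod.inject)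
    then show ?thesis using no_swap[OF x(1) y(1)] by blast
  next
    assume a: "i = j2 x" "j = j1 y"
    then have "(bb x, x) = (y, bb y)" using e dart_j2[OF x(1)] dart_j1[OF y(1)] by metis
    then have "x = bb y \<and> y = bb x" by (metis prod.inject)
    then show ?thesis using no_swap[OF x(1) y(1)] by blast
  qed
qed

definition dd where "dd i = (int (v (Suc i)) - int (v i)) mod int n"
definition cc where "cc i = int n + (\<Sum>l<i. dd l)"

lemma cc_Suc: "cc (Suc i) = cc i + dd i" unfolding cc_def by simp

lemma dd_range: "i < m \<Longrightarrow> 0 < dd i \<and> dd i < int n"
proof -
  assume i: "i < m"
  have a: "0 \<le> dd i" "dd i < int n" unfolding dd_def using npos by auto
  have "dd i \<noteq> 0"
  proof
    assume "dd i = 0"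
    then have "int (v (Suc i)) mod int n = int (v i) mod int n"
      unfolding dd_def by (simp add: modeq_iff_dvd dvd_eq_mod_eq_0)
    then show False using vmod_inj[OF vr vr] vne[OF i] i by simp
  qed
  then show ?thesis using a by simp
qed

lemma cc_mod: "cc i mod int n = int (v i) mod int n"
proof (induction i)
  case 0 then show ?case unfolding cc_def using v0 by simp
next
  case (Suc i)
  have "dd i mod int n = (int (v (Suc i)) - int (v i)) mod int n" unfolding dd_def by simp
  then have "(cc i + dd i) mod int n = (int (v i) + (int (v (Suc i)) - int (v i))) mod int n"
    using Suc.IH by (metis mod_add_cong)
  then show ?case by (simp add: cc_Suc)
qed

lemma chain0_inst: "chain0 n cc"
proof
  show "2 \<le> n" by (rule n2)
  show "\<And>i. i < m \<Longrightarrow> cc i < cc (Suc i)" using dd_range cc_Suc by simp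
  show "\<And>i. i < m \<Longrightarrow> cc i mod int n \<noteq> cc (Suc i) mod int n"
    using cc_mod vmod_inj[OF vr vr] vne by (metis Suc_leI less_imp_le)
qed

lemma R_eq: "i < m \<Longrightarrow> aff_refl n (cc i) (cc (Suc i)) = refl_of n (v i) (v (Suc i))"
  by (rule refl_formula) (use npos vr vne cc_mod cc_Suc dd_def in auto)

lemma sum_ab: "0 < (a::int) \<Longrightarrow> a < N \<Longrightarrow> 0 < b \<Longrightarrow> b < N \<Longrightarrow> (a + b) mod N = 0 \<Longrightarrow> a + b = N"
proof -
  assume h: "0 < a" "a < N" "0 < b" "b < N" "(a + b) mod N = 0"
  show ?thesis
  proof (cases "a + b < N")
    case True then have "(a + b) mod N = a + b" using h by (intro mod_pos_pos_trivial) auto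
    then show ?thesis using h by simp
  next
    case False
    have "(a + b) mod N = (a + b - N) mod N" by (simp add: mod_diff_right_eq[symmetric])
    also have "\<dots> = a + b - N" using h False by (intro mod_pos_pos_trivial) auto
    finally show ?thesis using h by simp
  qed
qed

lemma dd_pair: "x \<in> {1..<n} \<Longrightarrow> dd (j1 x) + dd (j2 x) = int n"
proof -
  assume x: "x \<in> {1..<n}"
  have "(dd (j1 x) + dd (j2 x)) mod int n = ((int (bb x) - int x) + (int x - int (bb x))) mod int n"
    unfolding dd_def using vj1[OF x] vj2[OF x] by (simp add: mod_add_eq)
  then have "(dd (j1 x) + dd (j2 x)) mod int n = 0" by simp
  then show ?thesis using dd_range jlt[OF x] sum_ab by (meson order.strict_trans)
qed

lemma sum_dd: "(\<Sum>i<m. dd i) = int n * (int n - 1)"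
proof -
  have "(\<Sum>i<m. dd i) = (\<Sum>i\<in>j1 ` {1..<n}. dd i) + (\<Sum>i\<in>j2 ` {1..<n}. dd i)"
    unfolding steps using j12_ne by (intro sum.union_disjoint) auto
  also have "\<dots> = (\<Sum>x\<in>{1..<n}. dd (j1 x)) + (\<Sum>x\<in>{1..<n}. dd (j2 x))"
    using j1_inj j2_inj by (simp add: sum.reindex)
  also have "\<dots> = (\<Sum>x\<in>{1..<n}. dd (j1 x) + dd (j2 x))" by (simp add: sum.distrib)
  also have "\<dots> = (\<Sum>x\<in>{1..<n}. int n)" using dd_pair by simp
  also have "\<dots> = int n * (int n - 1)" using npos by (simp add: of_nat_diff)
  finally show ?thesis .
qed

lemma cc_m: "cc m = cc 0 + int n * (int n - 1)" unfolding cc_def using sum_dd by simp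

end


context ps begin

lemma cc_ne:
  assumes "k \<le> m" "w \<in> {1..n}" "v k \<noteq> w" "y mod int n = int w mod int n"
  shows "y mod int n \<noteq> cc k mod int n"
  using assms cc_mod[of k] vmod_inj[OF assms(2) vr[OF assms(1)]] by simp

lemma cc_eq:
  assumes "v k = w" "y mod int n = int w mod int n"
  shows "y mod int n = cc k mod int n"
  using assms cc_mod[of k] by simp

lemma product: "prod_refl (map (\<lambda>i. aff_refl n (cc i) (cc (Suc i))) [0..<m]) = lambda_n n"
proof -
  interpret C: chain0 n cc by (rule chain0_inst)
  have key: "C.F 0 x = lambda_n n x" for x
  proof (cases "x mod int n = 0")
    case True
    have "cc m mod int n = 0" using cc_mod[of m] vm by simp
    then have "C.F 0 x = x - (cc m - cc 0)" using C.hole[of x 0] True by simp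
    then show ?thesis using cc_m True unfolding lambda_n_def by simp
  next
    case False
    define t where "t = nat (x mod int n)"
    have tx: "int t = x mod int n" unfolding t_def using npos by simp
    have "x mod int n < int n" using npos by simp
    then have t: "t \<in> {1..<n}" using False tx by auto
    have tr: "t \<in> {1..n}" using t by simp
    have xm: "x mod int n = int t mod int n" using tx by simp
    have jl: "j2 t < j1 t" "j1 t < m" using jlt[OF t] by auto
    have bbr: "bb t \<in> {1..n}" using vr[of "Suc (j1 t)"] vj1[OF t] jl by simp
    have x1: "x mod int n = cc (j1 t) mod int n" using cc_eq[of "j1 t" t x] vj1[OF t] xm by simp
    have x2: "(x + dd (j1 t)) mod int n = int (bb t) mod int n"
    proof -
      have "(x + dd (j1 t)) mod int n = (cc (j1 t) + dd (j1 t)) mod int n" using x1 by (metis mod_add_left_eq)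
      also have "\<dots> = cc (Suc (j1 t)) mod int n" by (simp add: cc_Suc)
      also have "\<dots> = int (bb t) mod int n" using cc_mod[of "Suc (j1 t)"] vj1[OF t] by simp
      finally show ?thesis .
    qed
    have x3: "(x + int n) mod int n = int t mod int n" using xm by simp
    define G where "G k = (if Suc (j1 t) \<le> k then x else if Suc (j2 t) \<le> k then x + dd (j1 t) else x + int n)" for k
    have step: "C.F k x = G k" if "k \<le> m" for k
      using that
    proof (induction "m - k" arbitrary: k)
      case 0 then have km: "k = m" by simp
      have "G m = x" unfolding G_def using jl by simp
      then show ?case using km C.F_m by simp
    next
      case (Suc j)
      then have km: "k < m" by simp
      have IH: "C.F (Suc k) x = G (Suc k)" using Suc by simp
      have F: "C.F k x = aff_refl n (cc k) (cc (Suc k)) (G (Suc k))"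
        using C.F_step[OF km] IH unfolding C.R_def by simp
      have nd: "cc k mod int n \<noteq> cc (Suc k) mod int n" using C.ndiv[OF km] .
      consider (a) "Suc (j1 t) \<le> k" | (b) "k = j1 t" | (c) "Suc (j2 t) \<le> k" "k < j1 t"
        | (d) "k = j2 t" | (e) "k < j2 t" by linarith
      then show ?case
      proof cases
        case a
        have g: "G (Suc k) = x" "G k = x" unfolding G_def using a by auto
        have "v k \<noteq> t" using av1[OF t, of k] km a by linarith
        then have n1: "x mod int n \<noteq> cc k mod int n" using cc_ne[OF _ tr _ xm] km by simp
        have "v (Suc k) \<noteq> t" using av1[OF t, of "Suc k"] km a by linarith
        then have n2: "x mod int n \<noteq> cc (Suc k) mod int n" using cc_ne[OF _ tr _ xm] km by simp
        show ?thesis using F g aff_refl_other[OF n1 n2] by simp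
      next
        case b
        have g: "G (Suc k) = x" "G k = x + dd (j1 t)" unfolding G_def using b jl by auto
        have "aff_refl n (cc k) (cc (Suc k)) x = x + (cc (Suc k) - cc k)"
          using aff_refl_at_i[OF nd] x1 b by simp
        then show ?thesis using F g b by (simp add: cc_Suc)
      next
        case c
        have g: "G (Suc k) = x + dd (j1 t)" "G k = x + dd (j1 t)" unfolding G_def using c by auto
        have "v k \<noteq> bb t" using av2[OF t, of k] c by linarith
        then have n1: "(x + dd (j1 t)) mod int n \<noteq> cc k mod int n"
          using cc_ne[OF _ bbr _ x2] km by simp
        have "v (Suc k) \<noteq> bb t" using av2[OF t, of "Suc k"] c by linarith
        then have n2: "(x + dd (j1 t)) mod int n \<noteq> cc (Suc k) mod int n"
          using cc_ne[OF _ bbr _ x2] km by simp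
        show ?thesis using F g aff_refl_other[OF n1 n2] by simp
      next
        case d
        have g: "G (Suc k) = x + dd (j1 t)" "G k = x + int n" unfolding G_def using d jl by auto
        have e: "(x + dd (j1 t)) mod int n = cc k mod int n"
          using cc_eq[of k "bb t"] vj2[OF t] d x2 by simp
        have "aff_refl n (cc k) (cc (Suc k)) (x + dd (j1 t)) = x + dd (j1 t) + (cc (Suc k) - cc k)"
          using aff_refl_at_i[OF nd e] .
        then show ?thesis using F g d dd_pair[OF t] by (simp add: cc_Suc)
      next
        case e
        have g: "G (Suc k) = x + int n" "G k = x + int n" unfolding G_def using e jl by auto
        have "v k \<noteq> t" using av1[OF t, of k] km e by linarith
        then have n1: "(x + int n) mod int n \<noteq> cc k mod int n" using cc_ne[OF _ tr _ x3] km by simp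
        have "v (Suc k) \<noteq> t" using av1[OF t, of "Suc k"] km e by linarith
        then have n2: "(x + int n) mod int n \<noteq> cc (Suc k) mod int n"
          using cc_ne[OF _ tr _ x3] km by simp
        show ?thesis using F g aff_refl_other[OF n1 n2] by simp
      qed
    qed
    have "C.F 0 x = x + int n" using step[of 0] unfolding G_def by simp
    then show ?thesis using False unfolding lambda_n_def by simp
  qed
  have "C.F 0 = lambda_n n" using key by auto
  then show ?thesis unfolding C.F_def C.R_def[abs_def] by simp
qed

end


definition cnext :: "nat set \<Rightarrow> nat \<Rightarrow> nat" where
  "cnext S s = (if \<exists>t\<in>S. s < t then LEAST t. t \<in> S \<and> s < t else LEAST t. t \<in> S)"

lemma cnext_in: "s \<in> S \<Longrightarrow> cnext S s \<in> S"
  unfolding cnext_def by (auto intro: LeastI2_ex)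

lemma cnext_up: "s \<in> S \<Longrightarrow> t \<in> S \<Longrightarrow> s < t \<Longrightarrow> s < cnext S s \<and> cnext S s \<le> t"
  unfolding cnext_def by (auto intro: LeastI2_ex Least_le)

lemma cyc_reach_le: "finite S \<Longrightarrow> s \<in> S \<Longrightarrow> t \<in> S \<Longrightarrow> s \<le> t \<Longrightarrow> \<exists>k. (cnext S ^^ k) s = t"
proof (induction "t - s" arbitrary: s rule: less_induct)
  case less
  show ?case
  proof (cases "s = t")
    case True then show ?thesis by (intro exI[of _ 0]) simp
  next
    case False
    then have st: "s < t" using less by simp
    have g: "s < cnext S s" "cnext S s \<le> t" using cnext_up[OF less(3,4) st] by auto
    have "\<exists>k. (cnext S ^^ k) (cnext S s) = t"
      using less(1)[of "cnext S s"] g less(2,4) cnext_in[OF less(3)] by simp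
    then obtain k where "(cnext S ^^ k) (cnext S s) = t" by blast
    then have "(cnext S ^^ Suc k) s = t" by (simp add: funpow_Suc_right del: funpow.simps)
    then show ?thesis by blast
  qed
qed

lemma cyc_reach: "finite S \<Longrightarrow> s \<in> S \<Longrightarrow> t \<in> S \<Longrightarrow> \<exists>k. (cnext S ^^ k) s = t"
proof -
  assume S: "finite S" "s \<in> S" "t \<in> S"
  show ?thesis
  proof (cases "s \<le> t")
    case True then show ?thesis using cyc_reach_le S by blast
  next
    case False
    define M where "M = Max S"
    have M: "M \<in> S" "s \<le> M" using S unfolding M_def by (auto intro: Max_in)
    obtain k1 where k1: "(cnext S ^^ k1) s = M" using cyc_reach_le[OF S(1,2) M(1,2)] by blast
    have "\<not> (\<exists>u\<in>S. M < u)" using S(1) unfolding M_def by (meson Max_ge not_le)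
    then have "cnext S M = (LEAST u. u \<in> S)" unfolding cnext_def by simp
    then have gM: "cnext S M \<le> t" using S(3) by (simp add: Least_le)
    obtain k2 where k2: "(cnext S ^^ k2) (cnext S M) = t"
      using cyc_reach_le[OF S(1) cnext_in[OF M(1)] S(3) gM] by blast
    have "(cnext S ^^ (k2 + Suc k1)) s = (cnext S ^^ k2) ((cnext S ^^ Suc k1) s)"
      by (simp only: funpow_add comp_apply)
    also have "(cnext S ^^ Suc k1) s = cnext S M" using k1 by simp
    finally have "(cnext S ^^ (k2 + Suc k1)) s = t" using k2 by simp
    then show ?thesis by blast
  qed
qed

definition rv :: "'a \<times> 'b \<Rightarrow> 'b \<times> 'a" where "rv d = (snd d, fst d)"
lemma rv_rv[simp]: "rv (rv d) = d" unfolding rv_def by simp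
lemma rv_pair[simp]: "rv (a, b) = (b, a)" unfolding rv_def by simp

context ps begin

definition EE where "EE = (\<lambda>i. {v i, v (Suc i)}) ` {..<m}"
definition DD where "DD = dart ` {..<m}"
definition sidx where "sidx d = (THE s. s < m \<and> dart s = d)"
definition rho where "rho d = (if rv d \<in> DD then dart (Suc (sidx (rv d)) mod m) else d)"

lemma sidx_dart: "s < m \<Longrightarrow> sidx (dart s) = s"
  unfolding sidx_def using dart_inj by (intro the_equality) auto

lemma m_pos: "0 < m" using n2 by simp

lemma v_mod: "v (Suc s mod m) = v (Suc s)" if "s < m"
proof (cases "Suc s = m")
  case True then show ?thesis using v0 vm by simp
next
  case False then show ?thesis using that by simp
qed

lemma rev_dart: "i < m \<Longrightarrow> rv (dart i) \<in> DD"
proof -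
  assume i: "i < m"
  obtain x where x: "x \<in> {1..<n}" "i = j1 x \<or> i = j2 x" using step_cases[OF i] by blast
  from x(2) show ?thesis
  proof
    assume "i = j1 x"
    then have "rv (dart i) = dart (j2 x)" using dart_j1[OF x(1)] dart_j2[OF x(1)] by simp
    then show ?thesis unfolding DD_def using jlt[OF x(1)] by auto
  next
    assume "i = j2 x"
    then have "rv (dart i) = dart (j1 x)" using dart_j1[OF x(1)] dart_j2[OF x(1)] by simp
    then show ?thesis unfolding DD_def using jlt[OF x(1)] by auto
  qed
qed

lemma DD_rv: "d \<in> DD \<Longrightarrow> rv d \<in> DD" using rev_dart unfolding DD_def by blast

lemma darts_EE: "darts EE = DD"
proof
  show "DD \<subseteq> darts EE" unfolding DD_def EE_def darts_def dart_def by auto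
  show "darts EE \<subseteq> DD"
  proof
    fix d assume "d \<in> darts EE"
    then obtain i where i: "i < m" "{fst d, snd d} = {v i, v (Suc i)}" unfolding darts_def EE_def by auto
    then have "d = dart i \<or> d = rv (dart i)" unfolding dart_def rv_def
      by (cases d) (auto simp: doubleton_eq_iff)
    then show "d \<in> DD" using rev_dart[OF i(1)] i(1) unfolding DD_def by auto
  qed
qed

lemma rho_dart: "s < m \<Longrightarrow> rho (rv (dart s)) = dart (Suc s mod m)"
  unfolding rho_def using sidx_dart by (simp add: DD_def)

lemma walk: "k < m \<Longrightarrow> walk_dart n rho (v 1) k = dart k"
proof (induction k)
  case 0 then show ?case using v0 by (simp add: dart_def)
next
  case (Suc k)
  then have IH: "walk_dart n rho (v 1) k = (v k, v (Suc k))" by (simp add: dart_def)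
  have "rho (v (Suc k), v k) = dart (Suc k mod m)" using rho_dart[of k] Suc.prems by (simp add: dart_def)
  then have "rho (v (Suc k), v k) = dart (Suc k)" using Suc.prems by simp
  then show ?case using IH by (simp add: dart_def)
qed

lemma EE_alt: "EE = (\<lambda>x. {x, bb x}) ` {1..<n}"
proof
  show "EE \<subseteq> (\<lambda>x. {x, bb x}) ` {1..<n}"
  proof
    fix e assume "e \<in> EE"
    then obtain i where i: "i < m" "e = {v i, v (Suc i)}" unfolding EE_def by auto
    obtain x where x: "x \<in> {1..<n}" "i = j1 x \<or> i = j2 x" using step_cases[OF i(1)] by blast
    then have "e = {x, bb x}" using i(2) vj1[OF x(1)] vj2[OF x(1)] by auto
    then show "e \<in> (\<lambda>x. {x, bb x}) ` {1..<n}" using x(1) by blast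
  qed
  show "(\<lambda>x. {x, bb x}) ` {1..<n} \<subseteq> EE"
  proof
    fix e assume "e \<in> (\<lambda>x. {x, bb x}) ` {1..<n}"
    then obtain x where x: "x \<in> {1..<n}" "e = {x, bb x}" by blast
    then have "e = {v (j1 x), v (Suc (j1 x))}" using vj1[OF x(1)] by simp
    then show "e \<in> EE" unfolding EE_def using jlt[OF x(1)] by auto
  qed
qed

lemma card_EE: "card EE = n - 1"
proof -
  have "inj_on (\<lambda>x. {x, bb x}) {1..<n}"
  proof (rule inj_onI)
    fix x y assume x: "x \<in> {1..<n}" and y: "y \<in> {1..<n}" and e: "{x, bb x} = {y, bb y}"
    show "x = y"
    proof (rule ccontr)
      assume "x \<noteq> y"
      then have "x = bb y \<and> bb x = y" using e by (auto simp: doubleton_eq_iff)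
      then show False using no_swap[OF x y] by metis
    qed
  qed
  then show ?thesis unfolding EE_alt by (simp add: card_image)
qed

lemma tree: "is_tree_on n EE"
  unfolding is_tree_on_def
proof (intro conjI)
  show "EE \<subseteq> {{a, b} |a b. a \<in> {1..n} \<and> b \<in> {1..n} \<and> a \<noteq> b}"
  proof
    fix e assume "e \<in> EE"
    then obtain i where i: "i < m" "e = {v i, v (Suc i)}" unfolding EE_def by blast
    have "v i \<in> {1..n}" "v (Suc i) \<in> {1..n}" "v i \<noteq> v (Suc i)" using vr[of i] vr[of "Suc i"] vne[OF i(1)] i(1) by auto
    then show "e \<in> {{a, b} |a b. a \<in> {1..n} \<and> b \<in> {1..n} \<and> a \<noteq> b}" using i(2) by blast
  qed
  show "card EE = n - 1" by (rule card_EE)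
  have r: "(n, v k) \<in> {(a, b). {a, b} \<in> EE}\<^sup>*" if "k \<le> m" for k
    using that
  proof (induction k)
    case 0 then show ?case using v0 by simp
  next
    case (Suc k)
    then have "{v k, v (Suc k)} \<in> EE" unfolding EE_def by auto
    then show ?case using Suc by (auto intro: rtrancl_into_rtrancl)
  qed
  show "\<forall>w\<in>{1..n}. (n, w) \<in> {(a, b). {a, b} \<in> EE}\<^sup>*"
  proof
    fix w assume w: "w \<in> {1..n}"
    show "(n, w) \<in> {(a, b). {a, b} \<in> EE}\<^sup>*"
    proof (cases "w = n")
      case True then show ?thesis by simp
    next
      case False
      then have wt: "w \<in> {1..<n}" using w by simp
      then show ?thesis using r[of "j1 w"] vj1[OF wt] jlt[OF wt] by simp
    qed
  qed
qed

lemma DD_fin: "finite DD" unfolding DD_def by simp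

lemma rho_DD: "d \<in> DD \<Longrightarrow> rho d \<in> DD \<and> (\<exists>s<m. rv d = dart s \<and> rho d = dart (Suc s mod m))"
proof -
  assume d: "d \<in> DD"
  then obtain s where s: "s < m" "rv d = dart s" using DD_rv[OF d] unfolding DD_def by auto
  then have "rho d = dart (Suc s mod m)" using rho_dart[of s] by (metis rv_rv)
  then show ?thesis using s m_pos unfolding DD_def by auto
qed

lemma rho_inj: "inj_on rho DD"
proof (rule inj_onI)
  fix d1 d2 assume d: "d1 \<in> DD" "d2 \<in> DD" "rho d1 = rho d2"
  obtain s1 where s1: "s1 < m" "rv d1 = dart s1" "rho d1 = dart (Suc s1 mod m)" using rho_DD[OF d(1)] by blast
  obtain s2 where s2: "s2 < m" "rv d2 = dart s2" "rho d2 = dart (Suc s2 mod m)" using rho_DD[OF d(2)] by blast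
  have "Suc s1 mod m = Suc s2 mod m" using dart_inj[of "Suc s1 mod m" "Suc s2 mod m"] s1 s2 d(3) m_pos by simp
  moreover have "Suc s mod m = (if Suc s = m then 0 else Suc s)" if "s < m" for s
    using that by auto
  ultimately have "s1 = s2" using s1(1) s2(1) by (auto split: if_splits)
  then show "d1 = d2" using s1 s2 by (metis rv_rv)
qed

lemma rho_bij: "bij_betw rho DD DD"
proof -
  have "rho ` DD \<subseteq> DD" using rho_DD by auto
  then have "rho ` DD = DD" using endo_inj_surj[OF DD_fin _ rho_inj] by simp
  then show ?thesis using rho_inj unfolding bij_betw_def by simp
qed

lemma rho_fst: "d \<in> DD \<Longrightarrow> fst (rho d) = fst d"
proof -
  assume d: "d \<in> DD"
  obtain s where s: "s < m" "rv d = dart s" "rho d = dart (Suc s mod m)" using rho_DD[OF d] by blast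
  have "fst d = v (Suc s)" using s(2) unfolding rv_def dart_def by (metis prod.inject)
  then show ?thesis using s(3) v_mod[OF s(1)] unfolding dart_def by simp
qed

end


lemma cnext_char1: "u \<in> S \<Longrightarrow> s < u \<Longrightarrow> (\<forall>t\<in>S. s < t \<longrightarrow> u \<le> t) \<Longrightarrow> cnext S s = u"
  unfolding cnext_def by (auto intro!: Least_equality)

lemma cnext_char2: "u \<in> S \<Longrightarrow> (\<forall>t\<in>S. \<not> s < t) \<Longrightarrow> (\<forall>t\<in>S. u \<le> t) \<Longrightarrow> cnext S s = u"
  unfolding cnext_def by (auto intro!: Least_equality)

context ps begin

definition Sa where "Sa a = {s. s < m \<and> v (Suc s) = a}"

lemma Sa_fin: "finite (Sa a)" unfolding Sa_def by simp

lemma dfs: "s < m \<Longrightarrow> rv (dart (Suc s mod m)) = dart (cnext (Sa (v (Suc s))) s)"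
proof -
  assume s: "s < m"
  define a where "a = v (Suc s)"
  define j where "j = Suc s mod m"
  have jm: "j < m" unfolding j_def using m_pos by simp
  have va: "v j = a" unfolding j_def a_def using v_mod[OF s] .
  obtain x where x: "x \<in> {1..<n}" "j = j1 x \<or> j = j2 x" using step_cases[OF jm] by blast
  have jl: "j2 x < j1 x" "j1 x < m" using jlt[OF x(1)] by auto
  have jcase: "j = Suc s \<or> (j = 0 \<and> Suc s = m)" unfolding j_def using s
    by (cases "Suc s = m") auto
  from x(2) show ?thesis
  proof
    assume j: "j = j2 x"
    have a: "a = bb x" using va vj2[OF x(1)] j by simp
    have r: "rv (dart j) = dart (j1 x)" using j dart_j1[OF x(1)] dart_j2[OF x(1)] by simp
    have inS: "j1 x \<in> Sa a" unfolding Sa_def using jl vj1[OF x(1)] a by simp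
    have "cnext (Sa a) s = j1 x"
      using jcase
    proof
      assume js: "j = Suc s"
      show ?thesis
      proof (rule cnext_char1[OF inS])
        show "s < j1 x" using js j jl by simp
        show "\<forall>t\<in>Sa a. s < t \<longrightarrow> j1 x \<le> t"
        proof (intro ballI impI)
          fix t assume t: "t \<in> Sa a" "s < t"
          show "j1 x \<le> t"
          proof (rule ccontr)
            assume "\<not> j1 x \<le> t"
            then have "Suc (j2 x) \<le> Suc t" "Suc t \<le> j1 x" using t js j by auto
            then have "v (Suc t) \<noteq> bb x" using av2[OF x(1)] by blast
            then show False using t(1) a unfolding Sa_def by simp
          qed
        qed
      qed
    next
      assume js: "j = 0 \<and> Suc s = m"
      show ?thesis
      proof (rule cnext_char2[OF inS])
        show "\<forall>t\<in>Sa a. \<not> s < t" using js unfolding Sa_def by auto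
        show "\<forall>t\<in>Sa a. j1 x \<le> t"
        proof
          fix t assume t: "t \<in> Sa a"
          show "j1 x \<le> t"
          proof (rule ccontr)
            assume "\<not> j1 x \<le> t"
            then have "Suc (j2 x) \<le> Suc t" "Suc t \<le> j1 x" using js j by auto
            then have "v (Suc t) \<noteq> bb x" using av2[OF x(1)] by blast
            then show False using t a unfolding Sa_def by simp
          qed
        qed
      qed
    qed
    then show ?thesis using r unfolding j_def a_def by simp
  next
    assume j: "j = j1 x"
    have a: "a = x" using va vj1[OF x(1)] j by simp
    have r: "rv (dart j) = dart (j2 x)" using j dart_j1[OF x(1)] dart_j2[OF x(1)] by simp
    have inS: "j2 x \<in> Sa a" unfolding Sa_def using jl vj2[OF x(1)] a by simp
    have js: "j = Suc s" using jcase j jl by auto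
    have "cnext (Sa a) s = j2 x"
    proof (rule cnext_char2[OF inS])
      show "\<forall>t\<in>Sa a. \<not> s < t"
      proof (intro ballI notI)
        fix t assume t: "t \<in> Sa a" "s < t"
        then have "Suc t \<le> m" "Suc (j1 x) \<le> Suc t" using js j unfolding Sa_def by auto
        then have "v (Suc t) \<noteq> x" using av1[OF x(1)] by blast
        then show False using t a unfolding Sa_def by simp
      qed
      show "\<forall>t\<in>Sa a. j2 x \<le> t"
      proof
        fix t assume t: "t \<in> Sa a"
        show "j2 x \<le> t"
        proof (rule ccontr)
          assume "\<not> j2 x \<le> t"
          then have "Suc t \<le> m" "Suc t \<le> j2 x" using jl by auto
          then have "v (Suc t) \<noteq> x" using av1[OF x(1)] by blast
          then show False using t a unfolding Sa_def by simp
        qed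
      qed
    qed
    then show ?thesis using r unfolding j_def a_def by simp
  qed
qed

lemma rho_iter: "s \<in> Sa a \<Longrightarrow> (rho ^^ k) (rv (dart s)) = rv (dart ((cnext (Sa a) ^^ k) s))"
proof (induction k arbitrary: s)
  case 0 then show ?case by simp
next
  case (Suc k)
  have s: "s < m" "v (Suc s) = a" using Suc.prems unfolding Sa_def by auto
  have "rho (rv (dart s)) = dart (Suc s mod m)" using rho_dart[OF s(1)] .
  also have "\<dots> = rv (dart (cnext (Sa a) s))" using dfs[OF s(1)] s(2) by (metis rv_rv)
  finally have e: "rho (rv (dart s)) = rv (dart (cnext (Sa a) s))" .
  have "(rho ^^ Suc k) (rv (dart s)) = (rho ^^ k) (rho (rv (dart s)))"
    by (simp only: funpow_Suc_right comp_apply)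
  also have "\<dots> = rv (dart ((cnext (Sa a) ^^ k) (cnext (Sa a) s)))"
    unfolding e using Suc.IH[OF cnext_in[OF Suc.prems]] .
  also have "\<dots> = rv (dart ((cnext (Sa a) ^^ Suc k) s))"
    by (simp only: funpow_Suc_right comp_apply)
  finally show ?case .
qed

lemma DD_at: "d \<in> DD \<Longrightarrow> \<exists>s\<in>Sa (fst d). d = rv (dart s)"
proof -
  assume d: "d \<in> DD"
  obtain s where s: "s < m" "rv d = dart s" using DD_rv[OF d] unfolding DD_def by blast
  have "v (Suc s) = fst d" using s(2) unfolding rv_def dart_def by (metis prod.inject)
  then show ?thesis using s unfolding Sa_def by (metis (mono_tags, lifting) mem_Collect_eq rv_rv)
qed

lemma rotation: "is_rotation_system EE rho"
  unfolding is_rotation_system_def darts_EE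
proof (intro conjI ballI allI impI)
  show "bij_betw rho DD DD" by (rule rho_bij)
  show "rho d = d" if "d \<notin> DD" for d
  proof -
    have "rv d \<notin> DD" using that DD_rv by (metis rv_rv)
    then show ?thesis unfolding rho_def by simp
  qed
  show "fst (rho d) = fst d" if "d \<in> DD" for d using rho_fst that .
  fix d d' assume d: "d \<in> DD" and d': "d' \<in> DD" and f: "fst d = fst d'"
  obtain s where s: "s \<in> Sa (fst d)" "d = rv (dart s)" using DD_at[OF d] by blast
  obtain s' where s': "s' \<in> Sa (fst d)" "d' = rv (dart s')" using DD_at[OF d'] f by auto
  obtain k where "(cnext (Sa (fst d)) ^^ k) s = s'" using cyc_reach[OF Sa_fin s(1) s'(1)] by blast
  then have "(rho ^^ k) d = d'" using rho_iter[OF s(1), of k] s(2) s'(2) by simp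
  then show "\<exists>k. (rho ^^ k) d = d'" by blast
qed

lemma constr_in: "(EE, rho, v 1) \<in> E_marked n"
proof -
  have "{n, v 1} \<in> EE" unfolding EE_def using v0 m_pos by force
  then show ?thesis unfolding E_marked_def using tree rotation by simp
qed

definition LL where "LL = map (\<lambda>k. refl_of n (v k) (v (Suc k))) [0..<m]"

lemma walk_list: "(\<lambda>k. let (u, w) = walk_dart n rho (v 1) k in
               if u < w then aff_refl n (int u) (int w)
               else aff_refl n (int u - int n) (int w)) k = refl_of n (v k) (v (Suc k))" if "k < m" for k
  using walk[OF that] unfolding dart_def refl_of_def by simp

lemma constr_rT: "r_T n (EE, rho, v 1) = LL"
  unfolding r_T_def LL_def using walk_list by (auto intro!: map_cong)

lemma LL_eq: "LL = map (\<lambda>i. aff_refl n (cc i) (cc (Suc i))) [0..<m]"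
  unfolding LL_def using R_eq by (auto intro!: map_cong)

lemma LL_good: "LL \<in> fact_lambda n \<and> tree_like n LL"
proof
  interpret C: chain0 n cc by (rule chain0_inst)
  have "set (map (\<lambda>i. aff_refl n (cc i) (cc (Suc i))) [0..<m]) \<subseteq> aff_reflections n"
    using C.ndiv by (fastforce simp: aff_reflections_def)
  then show "LL \<in> fact_lambda n"
    unfolding fact_lambda_def LL_eq using product by simp
  show "tree_like n LL"
    unfolding tree_like_def
  proof (intro conjI exI)
    show "length LL = 2 * n - 2" unfolding LL_def by simp
    show "\<forall>k\<in>{1..2 * n - 2}. cc (k - 1) < cc k \<and> cc (k - 1) mod int n \<noteq> cc k mod int n \<and>
          LL ! (k - 1) = aff_refl n (cc (k - 1)) (cc k)"
    proof
      fix k assume k: "k \<in> {1..2 * n - 2}"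
      then have k1: "k - 1 < m" "Suc (k - 1) = k" by auto
      show "cc (k - 1) < cc k \<and> cc (k - 1) mod int n \<noteq> cc k mod int n \<and>
          LL ! (k - 1) = aff_refl n (cc (k - 1)) (cc k)"
        using C.incr[OF k1(1)] C.ndiv[OF k1(1)] k1 unfolding LL_eq by simp
    qed
    show "\<forall>k\<in>{1..2 * n - 3}. cc k mod int n = cc k mod int n" by simp
  qed
qed

end


lemma exit_step:
  assumes "P i" "\<not> P j" "i \<le> j"
  shows "\<exists>k. i \<le> k \<and> k < j \<and> P k \<and> \<not> P (Suc k)"
  using assms
proof (induction j)
  case 0 then show ?case by simp
next
  case (Suc j)
  show ?case
  proof (cases "P j")
    case True then show ?thesis using Suc.prems by (intro exI[of _ j]) (auto simp: le_Suc_eq)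
  next
    case False
    have "i \<le> j" using Suc.prems False by (auto simp: le_Suc_eq)
    then show ?thesis using Suc.IH[OF Suc.prems(1) False] by auto
  qed
qed

definition edge_rel :: "nat set set \<Rightarrow> (nat \<times> nat) set" where
  "edge_rel F = {(a, b). {a, b} \<in> F}"

lemma edge_rel_sym: "(a, b) \<in> edge_rel F \<Longrightarrow> (b, a) \<in> edge_rel F"
  unfolding edge_rel_def by (simp add: insert_commute)

lemma edge_rel_rtrancl_sym: "(a, b) \<in> (edge_rel F)\<^sup>* \<Longrightarrow> (b, a) \<in> (edge_rel F)\<^sup>*"
proof (induction rule: rtrancl_induct)
  case base then show ?case by simp
next
  case (step y z)
  then show ?case using edge_rel_sym[OF step(2)] by (meson converse_rtrancl_into_rtrancl)
qed

lemma conn_card: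
  assumes V: "finite V" "r \<in> V"
    and F: "F \<subseteq> {{a, b} | a b. a \<in> V \<and> b \<in> V \<and> a \<noteq> b}"
    and conn: "\<forall>w\<in>V. (r, w) \<in> (edge_rel F)\<^sup>*"
  shows "card V \<le> Suc (card F)"
proof -
  let ?R = "edge_rel F"
  define dist where "dist w = (LEAST k. (r, w) \<in> ?R ^^ k)" for w
  have dex: "(r, w) \<in> ?R ^^ dist w" if "w \<in> V" for w
    unfolding dist_def using conn that rtrancl_power by (metis (no_types, lifting) LeastI)
  have dle: "dist w \<le> k" if "(r, w) \<in> ?R ^^ k" for w k
    unfolding dist_def using that by (rule Least_le)
  have pex: "\<exists>p. (r, p) \<in> ?R ^^ (dist w - 1) \<and> (p, w) \<in> ?R" if "w \<in> V - {r}" for w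
  proof -
    have "dist w \<noteq> 0"
    proof
      assume "dist w = 0"
      then have "(r, w) \<in> ?R ^^ 0" using dex[of w] that by simp
      then show False using that by simp
    qed
    then obtain j where j: "dist w = Suc j" by (cases "dist w") auto
    then have "(r, w) \<in> ?R ^^ Suc j" using dex[of w] that by simp
    then obtain p where "(r, p) \<in> ?R ^^ j" "(p, w) \<in> ?R" by (auto elim: relpow_Suc_E)
    then show ?thesis using j by auto
  qed
  define pr where "pr w = (SOME p. (r, p) \<in> ?R ^^ (dist w - 1) \<and> (p, w) \<in> ?R)" for w
  have pr: "(r, pr w) \<in> ?R ^^ (dist w - 1)" "(pr w, w) \<in> ?R" if "w \<in> V - {r}" for w
    using someI_ex[OF pex[OF that]] unfolding pr_def by auto
  have dpos: "0 < dist w" if "w \<in> V - {r}" for w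
  proof -
    have "dist w \<noteq> 0"
    proof
      assume "dist w = 0"
      then have "(r, w) \<in> ?R ^^ 0" using dex[of w] that by simp
      then show False using that by simp
    qed
    then show ?thesis by simp
  qed
  have dpr: "dist (pr w) < dist w" if "w \<in> V - {r}" for w
    using dle[OF pr(1)[OF that]] dpos[OF that] by simp
  have prV: "pr w \<in> V" if "w \<in> V - {r}" for w
  proof -
    have "{pr w, w} \<in> F" using pr(2)[OF that] unfolding edge_rel_def by simp
    then show ?thesis using F by (auto simp: doubleton_eq_iff)
  qed
  let ?f = "\<lambda>w. {pr w, w}"
  have inj: "inj_on ?f (V - {r})"
  proof (rule inj_onI)
    fix w w' assume w: "w \<in> V - {r}" and w': "w' \<in> V - {r}" and e: "?f w = ?f w'"
    show "w = w'"
    proof (rule ccontr)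
      assume ne: "w \<noteq> w'"
      then have h: "w = pr w' \<and> w' = pr w" using e by (metis doubleton_eq_iff)
      have "dist w' < dist w" using dpr[OF w] h by metis
      moreover have "dist w < dist w'" using dpr[OF w'] h by metis
      ultimately show False by linarith
    qed
  qed
  have img: "?f ` (V - {r}) \<subseteq> F" using pr(2) unfolding edge_rel_def by auto
  have finF: "finite F"
  proof (rule finite_subset[OF F])
    have "{{a, b} | a b. a \<in> V \<and> b \<in> V \<and> a \<noteq> b} \<subseteq> Pow V" by auto
    then show "finite {{a, b} | a b. a \<in> V \<and> b \<in> V \<and> a \<noteq> b}" using V(1) by (meson finite_Pow_iff finite_subset)
  qed
  have "card (V - {r}) \<le> card F" using card_inj_on_le[OF inj img finF] .
  then show ?thesis using V by simp
qed


lemma comp_closed: "(x, a) \<in> (edge_rel F)\<^sup>* \<Longrightarrow> {a, b} \<in> F \<Longrightarrow> (x, b) \<in> (edge_rel F)\<^sup>*"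
  unfolding edge_rel_def by (auto intro: rtrancl_into_rtrancl)

locale tr =
  fixes n :: nat and E :: "nat set set" and \<rho> :: "nat \<times> nat \<Rightarrow> nat \<times> nat" and m0 :: nat
  assumes n2: "2 \<le> n" and inE: "(E, \<rho>, m0) \<in> E_marked n"
begin

abbreviation "m \<equiv> 2*n-2"
abbreviation "D \<equiv> darts E"
definition W where "W k = walk_dart n \<rho> m0 k"

lemma tree: "is_tree_on n E" and rot: "is_rotation_system E \<rho>" and mark: "{n, m0} \<in> E"
  using inE unfolding E_marked_def by auto

lemma Esub: "E \<subseteq> {{a, b} |a b. a \<in> {1..n} \<and> b \<in> {1..n} \<and> a \<noteq> b}"
  using tree unfolding is_tree_on_def by blast
lemma cardE: "card E = n - 1" using tree unfolding is_tree_on_def by blast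
lemma D_eq: "D = edge_rel E" unfolding darts_def edge_rel_def by simp
lemma conn: "\<forall>w\<in>{1..n}. (n, w) \<in> (edge_rel E)\<^sup>*"
  using tree unfolding is_tree_on_def edge_rel_def by blast

lemma edge_prop: "{a, b} \<in> E \<Longrightarrow> a \<in> {1..n} \<and> b \<in> {1..n} \<and> a \<noteq> b"
proof -
  assume "{a, b} \<in> E"
  then obtain c e where ce: "{a, b} = {c, e}" "c \<in> {1..n}" "e \<in> {1..n}" "c \<noteq> e" using Esub by blast
  then show ?thesis by (metis doubleton_eq_iff insert_absorb2 singleton_insert_inj_eq)
qed

lemma D_prop: "d \<in> D \<Longrightarrow> fst d \<in> {1..n} \<and> snd d \<in> {1..n} \<and> fst d \<noteq> snd d"
  unfolding darts_def using edge_prop by auto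

lemma D_rv: "d \<in> D \<Longrightarrow> rv d \<in> D" unfolding darts_def rv_def by (auto simp: insert_commute)

lemma D_fin: "finite D"
proof (rule finite_subset)
  show "D \<subseteq> {1..n} \<times> {1..n}" using D_prop by (auto simp: mem_Times_iff)
qed simp

lemma rho_bij: "bij_betw \<rho> D D" and rho_id: "\<And>d. d \<notin> D \<Longrightarrow> \<rho> d = d"
  and rho_fst: "\<And>d. d \<in> D \<Longrightarrow> fst (\<rho> d) = fst d"
  and rho_trans: "\<And>d d'. d \<in> D \<Longrightarrow> d' \<in> D \<Longrightarrow> fst d = fst d' \<Longrightarrow> \<exists>k. (\<rho> ^^ k) d = d'"
  using rot unfolding is_rotation_system_def by auto

lemma rho_D: "d \<in> D \<Longrightarrow> \<rho> d \<in> D" using rho_bij by (meson bij_betwE)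
lemma rho_inj: "inj_on \<rho> D" using rho_bij by (simp add: bij_betw_def)

definition phi where "phi d = (snd d, snd (\<rho> (snd d, fst d)))"

lemma W0: "W 0 = (n, m0)" unfolding W_def by simp
lemma W_Suc: "W (Suc k) = phi (W k)" unfolding W_def phi_def by (simp add: case_prod_beta Let_def)

lemma phi_D: "d \<in> D \<Longrightarrow> phi d = \<rho> (rv d)"
proof -
  assume d: "d \<in> D"
  have "fst (\<rho> (rv d)) = snd d" using rho_fst[OF D_rv[OF d]] by (simp add: rv_def)
  then show ?thesis unfolding phi_def rv_def by (metis prod.collapse)
qed

lemma phi_in: "d \<in> D \<Longrightarrow> phi d \<in> D" using phi_D rho_D D_rv by simp

lemma phi_inj: "inj_on phi D"
proof (rule inj_onI)
  fix d d' assume d: "d \<in> D" "d' \<in> D" "phi d = phi d'"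
  then have "\<rho> (rv d) = \<rho> (rv d')" using phi_D by simp
  then have "rv d = rv d'" using rho_inj D_rv d by (meson inj_onD)
  then show "d = d'" by (metis rv_rv)
qed

lemma W_in: "W k \<in> D"
proof (induction k)
  case 0 then show ?case using mark W0 unfolding darts_def by simp
next
  case (Suc k) then show ?case using phi_in W_Suc by simp
qed

lemma W_fst_Suc: "fst (W (Suc k)) = snd (W k)" unfolding W_Suc phi_def by simp

lemma cancel: "W (i + k) = W (j + k) \<Longrightarrow> W i = W j"
proof (induction k)
  case 0 then show ?case by simp
next
  case (Suc k)
  then have "phi (W (i + k)) = phi (W (j + k))" using W_Suc by simp
  then have "W (i + k) = W (j + k)" using phi_inj W_in by (meson inj_onD)
  then show ?case using Suc.IH by simp
qed

lemma period: "\<exists>p>0. W p = W 0"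
proof -
  have "\<not> inj_on W {..card D}"
  proof
    assume "inj_on W {..card D}"
    then have "card (W ` {..card D}) = Suc (card D)" by (simp add: card_image)
    moreover have "W ` {..card D} \<subseteq> D" unfolding image_subset_iff using W_in by blast
    then have "card (W ` {..card D}) \<le> card D" using card_mono[OF D_fin] by blast
    ultimately show False by linarith
  qed
  then obtain i j where ij: "i \<le> card D" "j \<le> card D" "i \<noteq> j" "W i = W j"
    unfolding inj_on_def by blast
  show ?thesis
  proof (cases "i < j")
    case True
    have "W (0 + i) = W ((j - i) + i)" using ij True by simp
    then have "W 0 = W (j - i)" by (rule cancel)
    then show ?thesis using True by (intro exI[of _ "j - i"]) simp
  next
    case False
    then have "j < i" using ij by simp
    have "W (0 + j) = W ((i - j) + j)" using ij \<open>j < i\<close> by simp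
    then have "W 0 = W (i - j)" by (rule cancel)
    then show ?thesis using \<open>j < i\<close> by (intro exI[of _ "i - j"]) simp
  qed
qed

lemma W_per: "W p = W 0 \<Longrightarrow> W (k + p) = W k"
  by (induction k) (simp_all add: W_Suc)

lemma W_per_mult: "W p = W 0 \<Longrightarrow> W (k + t * p) = W k"
proof (induction t)
  case 0 then show ?case by simp
next
  case (Suc t)
  have "W (k + Suc t * p) = W ((k + t * p) + p)" by (simp add: algebra_simps)
  also have "\<dots> = W (k + t * p)" using W_per[OF Suc.prems] .
  finally show ?case using Suc by simp
qed

lemma W_mod: "0 < p \<Longrightarrow> W p = W 0 \<Longrightarrow> W k = W (k mod p)"
  using W_per_mult[of p "k mod p" "k div p"] by simp

lemma bridge:
  assumes e: "{u, w} \<in> E"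
  shows "(u, w) \<notin> (edge_rel (E - {{u, w}}))\<^sup>*"
proof
  assume uw: "(u, w) \<in> (edge_rel (E - {{u, w}}))\<^sup>*"
  let ?F = "E - {{u, w}}"
  have sub: "edge_rel E \<subseteq> (edge_rel ?F)\<^sup>*"
  proof
    fix ab assume ab: "ab \<in> edge_rel E"
    obtain a b where abd: "ab = (a, b)" by (cases ab)
    show "ab \<in> (edge_rel ?F)\<^sup>*"
    proof (cases "{a, b} = {u, w}")
      case True
      then have "(a, b) = (u, w) \<or> (a, b) = (w, u)" by (auto simp: doubleton_eq_iff)
      then show ?thesis using uw edge_rel_rtrancl_sym[OF uw] abd by auto
    next
      case False
      then have "(a, b) \<in> edge_rel ?F" using ab abd unfolding edge_rel_def by simp
      then show ?thesis using abd by simp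
    qed
  qed
  have "(edge_rel E)\<^sup>* \<subseteq> (edge_rel ?F)\<^sup>*"
    using rtrancl_mono[OF sub] by simp
  then have c: "\<forall>x\<in>{1..n}. (n, x) \<in> (edge_rel ?F)\<^sup>*" using conn by blast
  have "card {1..n} \<le> Suc (card ?F)"
    by (rule conn_card[OF _ _ _ c]) (use Esub n2 in auto)
  moreover have "card ?F = n - 2" using cardE e D_fin
    by (metis card_Diff_singleton diff_diff_left one_add_one finite_Diff2 card.infinite n2
      finite_subset[OF Esub] finite_Collect_conjI)
  ultimately show False using n2 by simp
qed

end


context tr begin

definition Orb where "Orb = range W"

lemma orb_rv: "d \<in> Orb \<Longrightarrow> rv d \<in> Orb"
proof (rule ccontr)
  assume d: "d \<in> Orb" and nrv: "rv d \<notin> Orb"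
  obtain i where i: "W i = d" using d unfolding Orb_def by (metis rangeE)
  obtain u w where uw: "d = (u, w)" by (cases d)
  have e: "{u, w} \<in> E" using W_in[of i] i uw unfolding darts_def by simp
  let ?F = "E - {{u, w}}"
  define A where "A = {y. (u, y) \<in> (edge_rel ?F)\<^sup>*}"
  have uA: "u \<in> A" unfolding A_def by simp
  have wA: "w \<notin> A" unfolding A_def using bridge[OF e] by simp
  have out: "fst (W (Suc i + j)) \<notin> A" for j
  proof (induction j)
    case 0 then show ?case using W_fst_Suc[of i] i uw wA by simp
  next
    case (Suc j)
    obtain a b where ab: "W (Suc i + j) = (a, b)" by (cases "W (Suc i + j)")
    have abE: "{a, b} \<in> E" using W_in[of "Suc i + j"] ab unfolding darts_def by simp
    have aA: "a \<notin> A" using Suc.IH ab by simp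
    have "b \<notin> A"
    proof
      assume bA: "b \<in> A"
      show False
      proof (cases "{a, b} = {u, w}")
        case True
        then have "(a = u \<and> b = w) \<or> (a = w \<and> b = u)" by (auto simp: doubleton_eq_iff)
        then show False
        proof
          assume "a = u \<and> b = w" then show False using aA uA by simp
        next
          assume "a = w \<and> b = u"
          then have "W (Suc i + j) = rv d" using ab uw by simp
          then show False using nrv unfolding Orb_def by (metis rangeI)
        qed
      next
        case False
        then have "{b, a} \<in> ?F" using abE by (simp add: insert_commute)
        then have "a \<in> A" using bA unfolding A_def by (auto intro: comp_closed)
        then show False using aA by simp
      qed
    qed
    then show ?case using W_fst_Suc[of "Suc i + j"] ab by simp
  qed
  obtain p where p: "0 < p" "W p = W 0" using period by blast
  have "W (i + p) = W i" using W_per[OF p(2)] .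
  moreover have "i + p = Suc i + (p - 1)" using p by simp
  ultimately have "fst (W i) \<notin> A" using out[of "p - 1"] by metis
  then show False using i uw uA by simp
qed

lemma orb_rho: "d \<in> Orb \<Longrightarrow> \<rho> d \<in> Orb"
proof -
  assume d: "d \<in> Orb"
  obtain i where i: "W i = rv d" using orb_rv[OF d] unfolding Orb_def by (metis rangeE)
  have "W (Suc i) = phi (rv d)" using W_Suc i by simp
  also have "\<dots> = \<rho> d" using phi_D[of "rv d"] W_in[of i] i by simp
  finally show ?thesis unfolding Orb_def by (metis rangeI)
qed

lemma orb_rho_pow: "d \<in> Orb \<Longrightarrow> (\<rho> ^^ k) d \<in> Orb"
  by (induction k) (auto intro: orb_rho)

lemma orb_W: "W k \<in> Orb" unfolding Orb_def by simp

lemma Orb_sub: "Orb \<subseteq> D" unfolding Orb_def using W_in by (metis image_subsetI)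

lemma D_orb: "D \<subseteq> Orb"
proof -
  have main: "(n, x) \<in> (edge_rel E)\<^sup>* \<Longrightarrow> \<forall>d\<in>D. fst d = x \<longrightarrow> d \<in> Orb" for x
  proof (induction rule: rtrancl_induct)
    case base
    show ?case
    proof (intro ballI impI)
      fix d assume d: "d \<in> D" "fst d = n"
      have nD: "(n, m0) \<in> D" using W_in[of 0] W0 by simp
      obtain k where "(\<rho> ^^ k) (n, m0) = d" using rho_trans[OF nD d(1)] d(2) by auto
      then show "d \<in> Orb" using orb_rho_pow[OF orb_W[of 0]] W0 by metis
    qed
  next
    case (step y z)
    have yz: "(y, z) \<in> D" using step(2) D_eq by simp
    then have "(y, z) \<in> Orb" using step(3) by simp
    then have zy: "(z, y) \<in> Orb" using orb_rv by fastforce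
    have zyD: "(z, y) \<in> D" using D_rv[OF yz] by simp
    show ?case
    proof (intro ballI impI)
      fix d assume d: "d \<in> D" "fst d = z"
      obtain k where "(\<rho> ^^ k) (z, y) = d" using rho_trans[OF zyD d(1)] d(2) by auto
      then show "d \<in> Orb" using orb_rho_pow[OF zy] by metis
    qed
  qed
  show ?thesis
  proof
    fix d assume d: "d \<in> D"
    then have "(n, fst d) \<in> (edge_rel E)\<^sup>*" using conn D_prop by blast
    then show "d \<in> Orb" using main d by blast
  qed
qed

lemma Orb_eq: "Orb = D" using Orb_sub D_orb by blast

lemma card_D: "card D = m"
proof -
  define D1 where "D1 = {d \<in> D. fst d < snd d}"
  have bij: "bij_betw (\<lambda>d. {fst d, snd d}) D1 E"
  proof (rule bij_betwI')
    fix x y assume x: "x \<in> D1" and y: "y \<in> D1"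
    show "({fst x, snd x} = {fst y, snd y}) = (x = y)"
    proof
      assume "{fst x, snd x} = {fst y, snd y}"
      then have "(fst x = fst y \<and> snd x = snd y) \<or> (fst x = snd y \<and> snd x = fst y)"
        by (auto simp: doubleton_eq_iff)
      then show "x = y" using x y unfolding D1_def by (auto simp: prod_eq_iff)
    qed simp
  next
    fix x assume "x \<in> D1" then show "{fst x, snd x} \<in> E" unfolding D1_def darts_def by auto
  next
    fix e assume e: "e \<in> E"
    then obtain a b where ab: "e = {a, b}" "a \<noteq> b" using Esub by blast
    show "\<exists>x\<in>D1. e = {fst x, snd x}"
    proof (cases "a < b")
      case True then show ?thesis using e ab unfolding D1_def darts_def by (intro bexI[of _ "(a, b)"]) auto
    next
      case False then have "b < a" using ab by simp
      then show ?thesis using e ab unfolding D1_def darts_def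
        by (intro bexI[of _ "(b, a)"]) (auto simp: insert_commute)
    qed
  qed
  have c1: "card D1 = n - 1" using bij_betw_same_card[OF bij] cardE by simp
  have D: "D = D1 \<union> rv ` D1"
  proof
    show "D \<subseteq> D1 \<union> rv ` D1"
    proof
      fix d assume d: "d \<in> D"
      show "d \<in> D1 \<union> rv ` D1"
      proof (cases "fst d < snd d")
        case True then show ?thesis using d unfolding D1_def by simp
      next
        case False
        then have "snd d < fst d" using D_prop[OF d] by simp
        then have "rv d \<in> D1" using D_rv[OF d] unfolding D1_def rv_def by simp
        then show ?thesis by (metis UnI2 image_eqI rv_rv)
      qed
    qed
    show "D1 \<union> rv ` D1 \<subseteq> D" unfolding D1_def using D_rv by auto
  qed
  have disj: "D1 \<inter> rv ` D1 = {}" unfolding D1_def rv_def by auto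
  have fin: "finite D1" unfolding D1_def using D_fin by simp
  have "inj_on rv D1" by (metis inj_onI rv_rv)
  then have c2: "card (rv ` D1) = n - 1" using c1 by (simp add: card_image)
  have "card D = card D1 + card (rv ` D1)" unfolding D using disj fin by (simp add: card_Un_disjoint)
  then show ?thesis using c1 c2 n2 by simp
qed

lemma W_inj: "inj_on W {..<m}"
proof (rule ccontr)
  assume "\<not> inj_on W {..<m}"
  then obtain i j where ij: "i < m" "j < m" "i < j" "W i = W j"
    unfolding inj_on_def by (metis lessThan_iff linorder_neqE_nat)
  have "W (0 + i) = W ((j - i) + i)" using ij by simp
  then have p: "W (j - i) = W 0" by (metis cancel)
  define p where "p = j - i"
  have pp: "0 < p" "p < m" "W p = W 0" using ij p unfolding p_def by auto
  have "Orb \<subseteq> W ` {..<p}"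
  proof
    fix d assume "d \<in> Orb"
    then obtain k where "d = W k" unfolding Orb_def by (metis rangeE)
    then have "d = W (k mod p)" using W_mod[OF pp(1,3)] by simp
    then show "d \<in> W ` {..<p}" using pp(1) by simp
  qed
  then have "card Orb \<le> p" by (metis card_image_le card_lessThan card_mono finite_imageI finite_lessThan order_trans)
  then show False using Orb_eq card_D pp(2) by simp
qed

lemma D_W: "D = W ` {..<m}"
proof -
  have sub: "W ` {..<m} \<subseteq> D" using W_in by blast
  have "card (W ` {..<m}) = m" using W_inj by (simp add: card_image)
  then show ?thesis using card_subset_eq[OF D_fin sub] card_D by simp
qed

lemma W_m: "W m = W 0"
proof -
  obtain j where j: "j < m" "W m = W j" using D_W W_in[of m] by (metis imageE lessThan_iff)
  show ?thesis
  proof (cases "j = 0")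
    case True then show ?thesis using j by simp
  next
    case False
    have "W ((m - j) + j) = W (0 + j)" using j by simp
    then have "W (m - j) = W 0" by (rule cancel)
    moreover have "m - j < m" "m - j \<noteq> 0" using False j by auto
    ultimately show ?thesis using W_inj by (metis inj_onD lessThan_iff zero_less_iff_neq_zero)
  qed
qed

end


context tr begin

definition vt where "vt k = fst (W k)"

lemma W_eq: "W k = (vt k, vt (Suc k))"
  unfolding vt_def using W_fst_Suc[of k] by (metis prod.collapse)

lemma vt_range: "vt k \<in> {1..n}" unfolding vt_def using D_prop[OF W_in] by blast
lemma vt0: "vt 0 = n" unfolding vt_def W0 by simp
lemma vtm: "vt m = n" unfolding vt_def W_m W0 by simp
lemma vt_ne: "vt k \<noteq> vt (Suc k)" using D_prop[OF W_in[of k]] W_eq[of k] by simp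

lemma W_idx: "i < m \<Longrightarrow> j < m \<Longrightarrow> W i = W j \<Longrightarrow> i = j"
  using W_inj by (meson inj_onD lessThan_iff)

lemma arr_ex: "x \<in> {1..<n} \<Longrightarrow> \<exists>k<m. vt (Suc k) = x"
proof -
  assume x: "x \<in> {1..<n}"
  have "(n, x) \<in> (edge_rel E)\<^sup>*" using conn x by simp
  moreover have "x \<noteq> n" using x by simp
  ultimately obtain y where "(y, x) \<in> edge_rel E" by (metis rtranclE)
  then have "(y, x) \<in> D" using D_eq by simp
  then obtain k where "k < m" "W k = (y, x)" using D_W by (metis imageE lessThan_iff)
  then show ?thesis using W_eq[of k] by auto
qed

definition j2t where "j2t x = (LEAST k. vt (Suc k) = x)"
definition bbt where "bbt x = vt (j2t x)"

lemma j2t: "x \<in> {1..<n} \<Longrightarrow> vt (Suc (j2t x)) = x \<and> j2t x < m"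
proof -
  assume x: "x \<in> {1..<n}"
  obtain k where k: "k < m" "vt (Suc k) = x" using arr_ex[OF x] by blast
  have "vt (Suc (j2t x)) = x" unfolding j2t_def using k(2) by (rule LeastI)
  moreover have "j2t x \<le> k" unfolding j2t_def using k(2) by (rule Least_le)
  ultimately show ?thesis using k(1) by simp
qed

lemma first_visit: "x \<in> {1..<n} \<Longrightarrow> vt k = x \<Longrightarrow> Suc (j2t x) \<le> k"
proof -
  assume x: "x \<in> {1..<n}" and k: "vt k = x"
  show ?thesis
  proof (cases k)
    case 0 then show ?thesis using k vt0 x by simp
  next
    case (Suc k')
    then have "j2t x \<le> k'" unfolding j2t_def using k by (intro Least_le) simp
    then show ?thesis using Suc by simp
  qed
qed

lemma W_j2t: "x \<in> {1..<n} \<Longrightarrow> W (j2t x) = (bbt x, x)"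
  using W_eq j2t unfolding bbt_def by simp

lemma edge_x: "x \<in> {1..<n} \<Longrightarrow> {x, bbt x} \<in> E"
  using W_in[of "j2t x"] W_j2t[of x] unfolding darts_def by (simp add: insert_commute)

definition j1t where "j1t x = (SOME j. j < m \<and> W j = (x, bbt x))"

lemma j1t: "x \<in> {1..<n} \<Longrightarrow> j1t x < m \<and> W (j1t x) = (x, bbt x)"
proof -
  assume x: "x \<in> {1..<n}"
  have "(x, bbt x) \<in> D" using edge_x[OF x] unfolding darts_def by simp
  then have "\<exists>j. j < m \<and> W j = (x, bbt x)" using D_W by (metis imageE lessThan_iff)
  then show ?thesis unfolding j1t_def by (rule someI_ex)
qed

definition Ar where "Ar x = {y. (x, y) \<in> (edge_rel (E - {{x, bbt x}}))\<^sup>*}"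

lemma bb_notin: "x \<in> {1..<n} \<Longrightarrow> bbt x \<notin> Ar x"
  unfolding Ar_def using bridge[OF edge_x] by simp

lemma x_in: "x \<in> Ar x" unfolding Ar_def by simp

lemma cross_out:
  assumes x: "x \<in> {1..<n}" and k: "k < m" "vt k \<in> Ar x" "vt (Suc k) \<notin> Ar x"
  shows "k = j1t x"
proof -
  define a b where "a = vt k" and "b = vt (Suc k)"
  have abE: "{a, b} \<in> E" using W_in[of k] W_eq[of k] unfolding a_def b_def darts_def by simp
  have e: "{a, b} = {x, bbt x}"
  proof (rule ccontr)
    assume "{a, b} \<noteq> {x, bbt x}"
    then have "{a, b} \<in> E - {{x, bbt x}}" using abE by simp
    then have "b \<in> Ar x" using k(2) unfolding Ar_def a_def by (auto intro: comp_closed)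
    then show False using k(3) b_def by simp
  qed
  have "a \<noteq> bbt x" using k(2) bb_notin[OF x] a_def by auto
  then have "a = x \<and> b = bbt x" using e by (metis doubleton_eq_iff)
  then have "W k = W (j1t x)" using W_eq[of k] j1t[OF x] a_def b_def by simp
  then show ?thesis using W_idx k(1) j1t[OF x] by blast
qed

lemma cross_in:
  assumes x: "x \<in> {1..<n}" and k: "k < m" "vt k \<notin> Ar x" "vt (Suc k) \<in> Ar x"
  shows "k = j2t x"
proof -
  define a b where "a = vt k" and "b = vt (Suc k)"
  have abE: "{a, b} \<in> E" using W_in[of k] W_eq[of k] unfolding a_def b_def darts_def by simp
  have e: "{a, b} = {x, bbt x}"
  proof (rule ccontr)
    assume "{a, b} \<noteq> {x, bbt x}"
    then have "{b, a} \<in> E - {{x, bbt x}}" using abE by (simp add: insert_commute)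
    then have "a \<in> Ar x" using k(3) unfolding Ar_def b_def by (auto intro: comp_closed)
    then show False using k(2) a_def by simp
  qed
  have "a \<noteq> x" using k(2) x_in a_def by auto
  then have "a = bbt x \<and> b = x" using e by (metis doubleton_eq_iff)
  then have "W k = W (j2t x)" using W_eq[of k] W_j2t[OF x] a_def b_def by simp
  then show ?thesis using W_idx k(1) j2t[OF x] by blast
qed

lemma n_notin: "x \<in> {1..<n} \<Longrightarrow> n \<notin> Ar x"
proof
  assume x: "x \<in> {1..<n}" and nA: "n \<in> Ar x"
  have "vt 0 \<in> Ar x" using nA vt0 by simp
  moreover have "vt (j2t x) \<notin> Ar x" using bb_notin[OF x] unfolding bbt_def .
  ultimately obtain k where k: "k < j2t x" "vt k \<in> Ar x" "vt (Suc k) \<notin> Ar x"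
    using exit_step[of "\<lambda>k. vt k \<in> Ar x" 0 "j2t x"] by auto
  have "k = j1t x" using cross_out[OF x _ k(2,3)] k(1) j2t[OF x] by simp
  then have "vt k = x" using j1t[OF x] W_eq[of "j1t x"] by simp
  then show False using first_visit[OF x] k(1) by fastforce
qed

lemma j_order: "x \<in> {1..<n} \<Longrightarrow> j2t x < j1t x"
proof -
  assume x: "x \<in> {1..<n}"
  have "vt (j1t x) = x" using j1t[OF x] W_eq[of "j1t x"] by simp
  then show ?thesis using first_visit[OF x] by fastforce
qed

lemma before: "x \<in> {1..<n} \<Longrightarrow> k \<le> j2t x \<Longrightarrow> vt k \<notin> Ar x"
proof
  assume x: "x \<in> {1..<n}" and k: "k \<le> j2t x" and A: "vt k \<in> Ar x"
  have "vt 0 \<notin> Ar x" using n_notin[OF x] vt0 by simp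
  then obtain k' where k': "k' < k" "vt k' \<notin> Ar x" "vt (Suc k') \<in> Ar x"
    using exit_step[of "\<lambda>k. vt k \<notin> Ar x" 0 k] A by auto
  have "k' = j2t x" using cross_in[OF x _ k'(2,3)] k'(1) k j2t[OF x] by simp
  then show False using k'(1) k by simp
qed

lemma inside: "x \<in> {1..<n} \<Longrightarrow> Suc (j2t x) \<le> k \<Longrightarrow> k \<le> j1t x \<Longrightarrow> vt k \<in> Ar x"
proof (rule ccontr)
  assume x: "x \<in> {1..<n}" and k: "Suc (j2t x) \<le> k" "k \<le> j1t x" and A: "vt k \<notin> Ar x"
  have "vt (Suc (j2t x)) \<in> Ar x" using j2t[OF x] x_in by simp
  then obtain k' where k': "Suc (j2t x) \<le> k'" "k' < k" "vt k' \<in> Ar x" "vt (Suc k') \<notin> Ar x"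
    using exit_step[of "\<lambda>k. vt k \<in> Ar x" "Suc (j2t x)" k] A k by auto
  have "k' = j1t x" using cross_out[OF x _ k'(3,4)] k'(2) k j1t[OF x] by simp
  then show False using k'(2) k by simp
qed

lemma after: "x \<in> {1..<n} \<Longrightarrow> Suc (j1t x) \<le> k \<Longrightarrow> k \<le> m \<Longrightarrow> vt k \<notin> Ar x"
proof
  assume x: "x \<in> {1..<n}" and k: "Suc (j1t x) \<le> k" "k \<le> m" and A: "vt k \<in> Ar x"
  have "vt (Suc (j1t x)) \<notin> Ar x" using j1t[OF x] W_eq[of "j1t x"] bb_notin[OF x] by simp
  then obtain k' where k': "Suc (j1t x) \<le> k'" "k' < k" "vt k' \<notin> Ar x" "vt (Suc k') \<in> Ar x"
    using exit_step[of "\<lambda>k. vt k \<notin> Ar x" "Suc (j1t x)" k] A k by auto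
  have "k' = j2t x" using cross_in[OF x _ k'(3,4)] k'(2) k by simp
  then show False using k'(1) j_order[OF x] by simp
qed

lemma ps_tr: "ps n vt j1t j2t bbt"
proof
  show "2 \<le> n" by (rule n2)
  show "\<And>k. k \<le> m \<Longrightarrow> vt k \<in> {1..n}" using vt_range by blast
  show "vt 0 = n" by (rule vt0)
  show "vt m = n" by (rule vtm)
  show "\<And>i. i < m \<Longrightarrow> vt i \<noteq> vt (Suc i)" using vt_ne by blast
  show "\<And>x. x \<in> {1..<n} \<Longrightarrow> j2t x < j1t x \<and> j1t x < m" using j_order j1t by blast
  show "\<And>x. x \<in> {1..<n} \<Longrightarrow> vt (j1t x) = x \<and> vt (Suc (j1t x)) = bbt x"
    using j1t W_eq by (metis prod.inject)
  show "\<And>x. x \<in> {1..<n} \<Longrightarrow> vt (j2t x) = bbt x \<and> vt (Suc (j2t x)) = x"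
    using j2t unfolding bbt_def by blast
  show "\<And>x k. x \<in> {1..<n} \<Longrightarrow> k \<le> m \<Longrightarrow> k \<le> j2t x \<or> Suc (j1t x) \<le> k \<Longrightarrow> vt k \<noteq> x"
    using before after x_in by metis
  show "\<And>x k. x \<in> {1..<n} \<Longrightarrow> Suc (j2t x) \<le> k \<Longrightarrow> k \<le> j1t x \<Longrightarrow> vt k \<noteq> bbt x"
    using inside bb_notin by metis
qed

lemma rT_eq: "r_T n (E, \<rho>, m0) = ps.LL n vt"
proof -
  interpret P: ps n vt j1t j2t bbt by (rule ps_tr)
  show ?thesis unfolding r_T_def P.LL_def
    using W_eq unfolding W_def refl_of_def by (auto intro!: map_cong)
qed

lemma forward: "r_T n (E, \<rho>, m0) \<in> fact_lambda n \<and> tree_like n (r_T n (E, \<rho>, m0))"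
proof -
  interpret P: ps n vt j1t j2t bbt by (rule ps_tr)
  show ?thesis using P.LL_good rT_eq by simp
qed

end


lemma aff_gt:
  assumes "0 < j - i" "i mod int n \<noteq> j mod int n"
  shows "aff_refl n i j y > y \<longleftrightarrow> y mod int n = i mod int n"
  using assms unfolding aff_refl_def by auto

lemma aff_lt:
  assumes "0 < j - i" "i mod int n \<noteq> j mod int n"
  shows "aff_refl n i j y < y \<longleftrightarrow> y mod int n = j mod int n"
  using assms unfolding aff_refl_def by auto

lemma refl_of_decomp:
  assumes "u \<in> {1..n}" "w \<in> {1..n}" "u \<noteq> w"
  shows "\<exists>i j. refl_of n u w = aff_refl n i j \<and> 0 < j - i \<and> i mod int n = int u mod int n
           \<and> j mod int n = int w mod int n \<and> i mod int n \<noteq> j mod int n"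
proof -
  have ne: "int u mod int n \<noteq> int w mod int n" using vmod_inj[OF assms(1,2)] assms(3) by simp
  show ?thesis
  proof (cases "u < w")
    case True then show ?thesis unfolding refl_of_def using ne by (intro exI[of _ "int u"] exI[of _ "int w"]) auto
  next
    case False
    have "(int u - int n) mod int n = int u mod int n" by simp
    then show ?thesis unfolding refl_of_def using False ne assms
      by (intro exI[of _ "int u - int n"] exI[of _ "int w"]) auto
  qed
qed

lemma refl_of_inj:
  assumes "u \<in> {1..n}" "w \<in> {1..n}" "u \<noteq> w" "u' \<in> {1..n}" "w' \<in> {1..n}" "u' \<noteq> w'"
    and e: "refl_of n u w = refl_of n u' w'"
  shows "u = u' \<and> w = w'"
proof -
  obtain i j where ij: "refl_of n u w = aff_refl n i j" "0 < j - i" "i mod int n = int u mod int n"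
    "j mod int n = int w mod int n" "i mod int n \<noteq> j mod int n" using refl_of_decomp[OF assms(1-3)] by blast
  obtain i' j' where ij': "refl_of n u' w' = aff_refl n i' j'" "0 < j' - i'" "i' mod int n = int u' mod int n"
    "j' mod int n = int w' mod int n" "i' mod int n \<noteq> j' mod int n" using refl_of_decomp[OF assms(4-6)] by blast
  have "aff_refl n i j (int u) > int u" using aff_gt[OF ij(2,5)] ij(3) by simp
  then have "aff_refl n i' j' (int u) > int u" using e ij(1) ij'(1) by simp
  then have "int u mod int n = int u' mod int n" using aff_gt[OF ij'(2,5)] ij'(3) by simp
  then have uu: "u = u'" using vmod_inj[OF assms(1,4)] by simp
  have "aff_refl n i j (int w) < int w" using aff_lt[OF ij(2,5)] ij(4) by simp
  then have "aff_refl n i' j' (int w) < int w" using e ij(1) ij'(1) by simp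
  then have "int w mod int n = int w' mod int n" using aff_lt[OF ij'(2,5)] ij'(4) by simp
  then have "w = w'" using vmod_inj[OF assms(2,5)] by simp
  then show ?thesis using uu by simp
qed

lemma E_from_D: "tr n E \<rho> m0 \<Longrightarrow> E = (\<lambda>d. {fst d, snd d}) ` darts E"
proof -
  assume "tr n E \<rho> m0"
  then interpret tr n E \<rho> m0 .
  show ?thesis
  proof
    show "E \<subseteq> (\<lambda>d. {fst d, snd d}) ` darts E"
    proof
      fix e assume e: "e \<in> E"
      then obtain a b where "e = {a, b}" using Esub by blast
      then show "e \<in> (\<lambda>d. {fst d, snd d}) ` darts E" using e unfolding darts_def by force
    qed
    show "(\<lambda>d. {fst d, snd d}) ` darts E \<subseteq> E" unfolding darts_def by auto
  qed
qed

lemma rT_inj: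
  assumes n2: "2 \<le> n" and T: "(E, \<rho>, m0) \<in> E_marked n" and T': "(E', \<rho>', m0') \<in> E_marked n"
    and eq: "r_T n (E, \<rho>, m0) = r_T n (E', \<rho>', m0')"
  shows "(E, \<rho>, m0) = (E', \<rho>', m0')"
proof -
  interpret A: tr n E \<rho> m0 using n2 T by unfold_locales
  interpret B: tr n E' \<rho>' m0' using n2 T' by unfold_locales
  interpret PA: ps n A.vt A.j1t A.j2t A.bbt by (rule A.ps_tr)
  interpret PB: ps n B.vt B.j1t B.j2t B.bbt by (rule B.ps_tr)
  have LL: "PA.LL = PB.LL" using eq A.rT_eq B.rT_eq by simp
  have Weq: "A.W k = B.W k" if k: "k < 2*n-2" for k
  proof -
    have "refl_of n (A.vt k) (A.vt (Suc k)) = refl_of n (B.vt k) (B.vt (Suc k))"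
      using arg_cong[OF LL, of "\<lambda>l. l ! k"] k unfolding PA.LL_def PB.LL_def by simp
    then have "A.vt k = B.vt k \<and> A.vt (Suc k) = B.vt (Suc k)"
      using refl_of_inj A.vt_range B.vt_range A.vt_ne B.vt_ne by blast
    then show ?thesis using A.W_eq B.W_eq by simp
  qed
  have DD: "darts E = darts E'" using A.D_W B.D_W Weq by auto
  have EE: "E = E'" using E_from_D[OF A.tr_axioms] E_from_D[OF B.tr_axioms] DD by simp
  have mm: "m0 = m0'" using Weq[of 0] A.W0 B.W0 n2 by simp
  have Wsuc: "A.W (Suc k) = B.W (Suc k)" if k: "k < 2*n-2" for k
  proof (cases "Suc k = 2*n-2")
    case True then show ?thesis using A.W_m B.W_m Weq[of 0] n2 by (metis zero_less_Suc)
  next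
    case False then show ?thesis using Weq k by simp
  qed
  have rr: "\<rho> = \<rho>'"
  proof
    fix d
    show "\<rho> d = \<rho>' d"
    proof (cases "d \<in> darts E")
      case False then show ?thesis using A.rho_id B.rho_id DD by metis
    next
      case True
      then have "rv d \<in> darts E" by (rule A.D_rv)
      then obtain k where k: "k < 2*n-2" "A.W k = rv d" using A.D_W by (metis imageE lessThan_iff)
      have "A.W (Suc k) = \<rho> d" using A.W_Suc k(2) A.phi_D[OF A.W_in[of k]] by simp
      moreover have "B.W (Suc k) = \<rho>' d"
      proof -
        have bk: "B.W k = rv d" using Weq[OF k(1)] k(2) by simp
        show ?thesis using B.W_Suc[of k] bk B.phi_D[OF B.W_in[of k]] by simp
      qed
      ultimately show ?thesis using Wsuc[OF k(1)] by simp
    qed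
  qed
  show ?thesis using EE mm rr by simp
qed


lemma backward:
  assumes n2: "2 \<le> n" and rs: "rs \<in> fact_lambda n" "tree_like n rs"
  shows "\<exists>T\<in>E_marked n. r_T n T = rs"
proof -
  let ?m = "2*n-2"
  have len: "length rs = ?m" and sub: "set rs \<subseteq> aff_reflections n" and pr: "prod_refl rs = lambda_n n"
    using rs(1) unfolding fact_lambda_def by auto
  obtain a b :: "nat \<Rightarrow> int" where
    ab1: "\<forall>k\<in>{1..2*n-2}. a (k-1) < b k \<and> a (k-1) mod int n \<noteq> b k mod int n
                          \<and> rs ! (k-1) = aff_refl n (a (k-1)) (b k)" and
    ab2: "\<forall>k\<in>{1..2*n-3}. a k mod int n = b k mod int n"
    using rs(2) unfolding tree_like_def by blast
  have abi: "a i < b (Suc i) \<and> a i mod int n \<noteq> b (Suc i) mod int n \<and> rs ! i = aff_refl n (a i) (b (Suc i))"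
    if "i < ?m" for i
    using ab1[rule_format, of "Suc i"] that by simp
  define c where "c k = a 0 + (\<Sum>i<k. b (Suc i) - a i)" for k
  have cS: "c (Suc i) = c i + (b (Suc i) - a i)" for i unfolding c_def by simp
  have cm: "c i mod int n = a i mod int n" if "i < ?m" for i
    using that
  proof (induction i)
    case 0 then show ?case unfolding c_def by simp
  next
    case (Suc i)
    have "c (Suc i) mod int n = (a i + (b (Suc i) - a i)) mod int n"
      unfolding cS using Suc by (metis mod_add_left_eq Suc_lessD)
    also have "\<dots> = b (Suc i) mod int n" by simp
    also have "\<dots> = a (Suc i) mod int n" using ab2[rule_format, of "Suc i"] Suc.prems by simp
    finally show ?case .
  qed
  have cSm: "c (Suc i) mod int n = b (Suc i) mod int n" if "i < ?m" for i
  proof -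
    have "c (Suc i) mod int n = (a i + (b (Suc i) - a i)) mod int n"
      unfolding cS using cm[OF that] by (metis mod_add_left_eq)
    then show ?thesis by simp
  qed
  have rsc: "rs ! i = aff_refl n (c i) (c (Suc i))" if "i < ?m" for i
  proof -
    have "aff_refl n (c i) (c (Suc i)) = aff_refl n (a i) (b (Suc i))"
      by (rule aff_refl_shift') (use cm[OF that] cS in auto)
    then show ?thesis using abi[OF that] by simp
  qed
  have rs_eq: "rs = map (\<lambda>i. aff_refl n (c i) (c (Suc i))) [0..<?m]"
    by (rule nth_equalityI) (use len rsc in auto)
  have ch: "chain n c"
  proof
    show "2 \<le> n" by (rule n2)
    show "\<And>i. i < ?m \<Longrightarrow> c i < c (Suc i)" using abi cS by simp
    show "\<And>i. i < ?m \<Longrightarrow> c i mod int n \<noteq> c (Suc i) mod int n" using abi cm cSm by simp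
    show "prod_refl (map (\<lambda>i. aff_refl n (c i) (c (Suc i))) [0..<?m]) = lambda_n n"
      using pr rs_eq by simp
  qed
  interpret C: chain n c by (rule ch)
  interpret P: ps n "\<lambda>k. vtx n (c k)" C.j1 C.j2 "\<lambda>x. vtx n (c (Suc (C.j1 x)))" by (rule C.ps_inst)
  have "P.LL = rs"
  proof -
    have "refl_of n (vtx n (c k)) (vtx n (c (Suc k))) = aff_refl n (c k) (c (Suc k))" if k: "k < ?m" for k
    proof (rule refl_formula[symmetric])
      show "0 < n" using n2 by simp
      show "vtx n (c k) \<in> {1..n}" "vtx n (c (Suc k)) \<in> {1..n}" using vtx_range n2 by auto
      show "vtx n (c k) \<noteq> vtx n (c (Suc k))" using P.vne[OF k] .
      show "c k mod int n = int (vtx n (c k)) mod int n" using vtx_mod n2 by simp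
      show "c (Suc k) - c k = (int (vtx n (c (Suc k))) - int (vtx n (c k))) mod int n"
        using C.d_eq[OF k] unfolding C.d_def .
    qed
    then show ?thesis unfolding P.LL_def rs_eq by (auto intro!: map_cong)
  qed
  then show ?thesis using P.constr_in P.constr_rT by blast
qed

theorem theorem3p10:
  fixes n :: nat
  assumes "n \<ge> 2"
  shows "(\<forall>T \<in> E_marked n. r_T n T \<in> fact_lambda n \<and> tree_like n (r_T n T)) \<and>
         bij_betw (r_T n) (E_marked n) {rs \<in> fact_lambda n. tree_like n rs}"
proof -
  have fw: "\<forall>T \<in> E_marked n. r_T n T \<in> fact_lambda n \<and> tree_like n (r_T n T)"
  proof
    fix T assume T: "T \<in> E_marked n"
    obtain E \<rho> m0 where Te: "T = (E, \<rho>, m0)" by (cases T)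
    interpret tr n E \<rho> m0 using assms T Te by unfold_locales auto
    show "r_T n T \<in> fact_lambda n \<and> tree_like n (r_T n T)" using forward Te by simp
  qed
  have inj: "inj_on (r_T n) (E_marked n)"
  proof (rule inj_onI)
    fix T T' assume T: "T \<in> E_marked n" and T': "T' \<in> E_marked n" and e: "r_T n T = r_T n T'"
    obtain E \<rho> m0 where Te: "T = (E, \<rho>, m0)" by (cases T)
    obtain E' \<rho>' m0' where Te': "T' = (E', \<rho>', m0')" by (cases T')
    show "T = T'" using rT_inj[OF assms] T T' e Te Te' by simp
  qed
  have img: "r_T n ` E_marked n = {rs \<in> fact_lambda n. tree_like n rs}"
  proof
    show "r_T n ` E_marked n \<subseteq> {rs \<in> fact_lambda n. tree_like n rs}" using fw by auto
    show "{rs \<in> fact_lambda n. tree_like n rs} \<subseteq> r_T n ` E_marked n"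
      using backward[OF assms] by blast
  qed
  show ?thesis using fw inj img unfolding bij_betw_def by simp
qed


end
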